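(* Let $\Omega\subset\mathbb{R}^2$ be a domain (connected open set) and let $u\in C^{2}(\Omega)$. Let $S(u)=\{(x,y)\in\Omega: u_x-y=0,\ u_y+x=0\}$, and on $\Omega\setminus S(u)$ let $D=\sqrt{(u_x-y)^2+(u_y+x)^2}$, $N(u)=(u_x-y,\,u_y+x)/D$ and $H=\operatorname{div}N(u)$ (the Euclidean divergence in the $xy$-plane). Let $p_0\in S(u)$ and suppose there are a constant $C>0$ and a neighborhood of $p_0$ on which $|H(p)|\le C/r(p)$ for all $p\notin S(u)$, where $r(p)=|p-p_0|$. Then either $p_0$ is an isolated point of $S(u)$, or there exists a small neighborhood of $p_0$ whose intersection with $S(u)$ is exactly a $C^{1}$ smooth curve passing through $p_0$. *)

theory Defs
  imports "HOL-Analysis.Analysis"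
begin

definition px :: "(real \<times> real \<Rightarrow> real) \<Rightarrow> real \<times> real \<Rightarrow> real" where
  "px f p = deriv (\<lambda>t. f (t, snd p)) (fst p)"

definition py :: "(real \<times> real \<Rightarrow> real) \<Rightarrow> real \<times> real \<Rightarrow> real" where
  "py f p = deriv (\<lambda>t. f (fst p, t)) (snd p)"

definition C1_on :: "(real \<times> real) set \<Rightarrow> (real \<times> real \<Rightarrow> real) \<Rightarrow> bool" where
  "C1_on \<Omega> f \<longleftrightarrow>
     (\<forall>p\<in>\<Omega>. (\<lambda>t. f (t, snd p)) field_differentiable (at (fst p))
            \<and> (\<lambda>t. f (fst p, t)) field_differentiable (at (snd p)))
     \<and> continuous_on \<Omega> f \<and> continuous_on \<Omega> (px f) \<and> continuous_on \<Omega> (py f)"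

definition C2_on :: "(real \<times> real) set \<Rightarrow> (real \<times> real \<Rightarrow> real) \<Rightarrow> bool" where
  "C2_on \<Omega> f \<longleftrightarrow> C1_on \<Omega> f \<and> C1_on \<Omega> (px f) \<and> C1_on \<Omega> (py f)"

definition Sing :: "(real \<times> real) set \<Rightarrow> (real \<times> real \<Rightarrow> real) \<Rightarrow> (real \<times> real) set" where
  "Sing \<Omega> u = {p \<in> \<Omega>. px u p - snd p = 0 \<and> py u p + fst p = 0}"

definition Dlen :: "(real \<times> real \<Rightarrow> real) \<Rightarrow> real \<times> real \<Rightarrow> real" where
  "Dlen u p = sqrt ((px u p - snd p)\<^sup>2 + (py u p + fst p)\<^sup>2)"

definition N1 :: "(real \<times> real \<Rightarrow> real) \<Rightarrow> real \<times> real \<Rightarrow> real" where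
  "N1 u p = (px u p - snd p) / Dlen u p"

definition N2 :: "(real \<times> real \<Rightarrow> real) \<Rightarrow> real \<times> real \<Rightarrow> real" where
  "N2 u p = (py u p + fst p) / Dlen u p"

text \<open>H = div N(u), meaningful on \<Omega> minus the singular set.\<close>
definition Hcurv :: "(real \<times> real \<Rightarrow> real) \<Rightarrow> real \<times> real \<Rightarrow> real" where
  "Hcurv u p = px (N1 u) p + py (N2 u) p"

definition C1_arc_through :: "(real \<times> real) set \<Rightarrow> real \<times> real \<Rightarrow> bool" where
  "C1_arc_through \<Gamma> p0 \<longleftrightarrow>
     (\<exists>\<gamma> \<gamma>' a b. a < 0 \<and> 0 < b \<and>
        (\<forall>t\<in>{a<..<b}. (\<gamma> has_vector_derivative \<gamma>' t) (at t) \<and> \<gamma>' t \<noteq> 0) \<and>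
        continuous_on {a<..<b} \<gamma>' \<and> inj_on \<gamma> {a<..<b} \<and>
        \<gamma> 0 = p0 \<and> \<Gamma> = \<gamma> ` {a<..<b})"

end

theory Submission
  imports Defs "HOL-Analysis.Analysis"
begin


lemma mvt_any:
  fixes f f' :: "real \<Rightarrow> real"
  assumes "\<And>t. min a b \<le> t \<Longrightarrow> t \<le> max a b \<Longrightarrow> DERIV f t :> f' t"
  shows "\<exists>z. min a b \<le> z \<and> z \<le> max a b \<and> f b - f a = (b - a) * f' z"
proof (cases a b rule: linorder_cases)
  case less
  then obtain z where "a < z" "z < b" "f b - f a = (b - a) * f' z"
    using MVT2[of a b f f'] assms by auto
  then show ?thesis using less by (intro exI[of _ z]) auto
next
  case equal
  then show ?thesis by (intro exI[of _ a]) auto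
next
  case greater
  then obtain z where "b < z" "z < a" "f a - f b = (a - b) * f' z"
    using MVT2[of b a f f'] assms by auto
  then show ?thesis using greater by (intro exI[of _ z]) (auto simp: algebra_simps)
qed



lemma dist_between_fst:
  fixes x x0 t y y0 :: real
  assumes "min x0 x \<le> t" "t \<le> max x0 x"
  shows "dist (t, y) (x0, y0) \<le> dist (x, y) (x0, y0)"
proof -
  have "\<bar>t - x0\<bar> \<le> \<bar>x - x0\<bar>" using assms by (auto simp: min_def max_def split: if_splits)
  then have "(t - x0)\<^sup>2 \<le> (x - x0)\<^sup>2" by (simp add: abs_le_square_iff)
  then show ?thesis by (simp add: dist_Pair_Pair dist_real_def)
qed

lemma dist_between_snd:
  fixes x x0 t y y0 :: real
  assumes "min y0 y \<le> t" "t \<le> max y0 y"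
  shows "dist (x0, t) (x0, y0) \<le> dist (x, y) (x0, y0)"
proof -
  have "\<bar>t - y0\<bar> \<le> \<bar>y - y0\<bar>" using assms by (auto simp: min_def max_def split: if_splits)
  then have "(t - y0)\<^sup>2 \<le> (x - x0)\<^sup>2 + (y - y0)\<^sup>2"
    using abs_le_square_iff[of "t - y0" "y - y0"] zero_le_power2[of "x - x0"] by linarith
  then have "sqrt ((t - y0)\<^sup>2) \<le> sqrt ((x - x0)\<^sup>2 + (y - y0)\<^sup>2)" by (rule real_sqrt_le_mono)
  then show ?thesis by (simp add: dist_Pair_Pair dist_real_def)
qed

lemma abs_fst_le_dist: "\<bar>fst q - fst p\<bar> \<le> dist q (p::real\<times>real)"
  by (metis dist_fst_le dist_real_def)
lemma abs_snd_le_dist: "\<bar>snd q - snd p\<bar> \<le> dist q (p::real\<times>real)"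
  by (metis dist_snd_le dist_real_def)

lemma expansion:
  fixes f fx fy :: "real\<times>real \<Rightarrow> real"
  assumes "open W" "p0 \<in> W"
  and dx: "\<And>p. p \<in> W \<Longrightarrow> DERIV (\<lambda>t. f (t, snd p)) (fst p) :> fx p"
  and dy: "\<And>p. p \<in> W \<Longrightarrow> DERIV (\<lambda>t. f (fst p, t)) (snd p) :> fy p"
  and cx: "isCont fx p0" and cy: "isCont fy p0"
  and "e > 0"
  shows "\<exists>d>0. \<forall>q. dist q p0 < d \<longrightarrow>
     \<bar>f q - f p0 - fx p0 * (fst q - fst p0) - fy p0 * (snd q - snd p0)\<bar> \<le> e * dist q p0"
proof -
  obtain r where r: "r > 0" "ball p0 r \<subseteq> W" using assms(1,2) open_contains_ball by blast
  obtain d1 where d1: "d1 > 0" "\<forall>p. dist p p0 < d1 \<longrightarrow> dist (fx p) (fx p0) < e/2"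
    using cx \<open>e>0\<close> unfolding continuous_at_eps_delta by (meson half_gt_zero)
  obtain d2 where d2: "d2 > 0" "\<forall>p. dist p p0 < d2 \<longrightarrow> dist (fy p) (fy p0) < e/2"
    using cy \<open>e>0\<close> unfolding continuous_at_eps_delta by (meson half_gt_zero)
  define d where "d = min r (min d1 d2)"
  have "d > 0" using r d1 d2 by (simp add: d_def)
  moreover have "\<bar>f q - f p0 - fx p0 * (fst q - fst p0) - fy p0 * (snd q - snd p0)\<bar> \<le> e * dist q p0"
    if q: "dist q p0 < d" for q
  proof -
    obtain x y where qxy: "q = (x, y)" by (cases q)
    obtain x0 y0 where pxy: "p0 = (x0, y0)" by (cases p0)
    have inW: "p \<in> W" if "dist p p0 < d" for p using that r unfolding d_def by (auto simp: dist_commute)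
    obtain s where s: "min x0 x \<le> s" "s \<le> max x0 x" "f (x, y) - f (x0, y) = (x - x0) * fx (s, y)"
    proof -
      have "\<exists>z. min x0 x \<le> z \<and> z \<le> max x0 x \<and> (\<lambda>t. f (t, y)) x - (\<lambda>t. f (t, y)) x0 = (x - x0) * (\<lambda>t. fx (t, y)) z"
      proof (rule mvt_any)
        fix t assume "min x0 x \<le> t" "t \<le> max x0 x"
        then have "dist (t, y) p0 < d" using dist_between_fst[of x0 x t y y0] q qxy pxy by auto
        then show "DERIV (\<lambda>t. f (t, y)) t :> fx (t, y)" using dx[of "(t,y)"] inW by auto
      qed
      then show ?thesis using that by auto
    qed
    obtain w where w: "min y0 y \<le> w" "w \<le> max y0 y" "f (x0, y) - f (x0, y0) = (y - y0) * fy (x0, w)"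
    proof -
      have "\<exists>z. min y0 y \<le> z \<and> z \<le> max y0 y \<and> (\<lambda>t. f (x0, t)) y - (\<lambda>t. f (x0, t)) y0 = (y - y0) * (\<lambda>t. fy (x0, t)) z"
      proof (rule mvt_any)
        fix t assume "min y0 y \<le> t" "t \<le> max y0 y"
        then have "dist (x0, t) p0 < d" using dist_between_snd[of y0 y t x0 x] q qxy pxy by auto
        then show "DERIV (\<lambda>t. f (x0, t)) t :> fy (x0, t)" using dy[of "(x0,t)"] inW by auto
      qed
      then show ?thesis using that by auto
    qed
    have ds: "dist (s, y) p0 < d" using dist_between_fst[of x0 x s y y0] s q qxy pxy by auto
    have dw: "dist (x0, w) p0 < d" using dist_between_snd[of y0 y w x0 x] w q qxy pxy by auto
    have e1: "\<bar>fx (s, y) - fx p0\<bar> \<le> e/2" using d1 ds unfolding d_def dist_real_def by force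
    have e2: "\<bar>fy (x0, w) - fy p0\<bar> \<le> e/2" using d2 dw unfolding d_def dist_real_def by force
    have "f q - f p0 - fx p0 * (fst q - fst p0) - fy p0 * (snd q - snd p0)
        = (x - x0) * (fx (s, y) - fx p0) + (y - y0) * (fy (x0, w) - fy p0)"
      using s w qxy pxy by (simp add: algebra_simps)
    also have "\<bar>\<dots>\<bar> \<le> \<bar>x - x0\<bar> * (e/2) + \<bar>y - y0\<bar> * (e/2)"
    proof -
      have "\<bar>x - x0\<bar> * \<bar>fx (s, y) - fx p0\<bar> \<le> \<bar>x - x0\<bar> * (e/2)" by (rule mult_left_mono[OF e1]) simp
      moreover have "\<bar>y - y0\<bar> * \<bar>fy (x0, w) - fy p0\<bar> \<le> \<bar>y - y0\<bar> * (e/2)" by (rule mult_left_mono[OF e2]) simp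
      moreover have "\<bar>(x - x0) * (fx (s, y) - fx p0) + (y - y0) * (fy (x0, w) - fy p0)\<bar>
         \<le> \<bar>x - x0\<bar> * \<bar>fx (s, y) - fx p0\<bar> + \<bar>y - y0\<bar> * \<bar>fy (x0, w) - fy p0\<bar>"
        by (metis abs_mult abs_triangle_ineq)
      ultimately show ?thesis by linarith
    qed
    also have "\<dots> \<le> dist q p0 * (e/2) + dist q p0 * (e/2)"
      using abs_fst_le_dist[of q p0] abs_snd_le_dist[of q p0] qxy pxy \<open>e>0\<close>
      by (intro add_mono mult_right_mono) auto
    finally show ?thesis by simp
  qed
  ultimately show ?thesis by blast
qed



lemma square_dist:
  fixes x y s t h :: real
  assumes "h > 0" "x \<le> s" "s \<le> x + h" "y \<le> t" "t \<le> y + h"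
  shows "dist (s, t) (x, y) < 2 * h"
proof -
  have "(s - x)\<^sup>2 \<le> h\<^sup>2" using assms by (intro power_mono) auto
  moreover have "(t - y)\<^sup>2 \<le> h\<^sup>2" using assms by (intro power_mono) auto
  moreover have "h * h > 0" using assms by simp
  ultimately have "(s - x)\<^sup>2 + (t - y)\<^sup>2 < (2 * h)\<^sup>2" by (simp add: power2_eq_square)
  then have A: "sqrt ((s - x)\<^sup>2 + (t - y)\<^sup>2) < sqrt ((2 * h)\<^sup>2)" by (rule real_sqrt_less_mono)
  have B: "sqrt ((2 * h)\<^sup>2) = 2 * h" using assms by (simp only: real_sqrt_abs)
  have C: "dist (s, t) (x, y) = sqrt ((s - x)\<^sup>2 + (t - y)\<^sup>2)" by (simp add: dist_Pair_Pair dist_real_def)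
  show ?thesis unfolding C using A unfolding B .
qed

lemma schwarz:
  fixes u ux uy uxy uyx :: "real\<times>real \<Rightarrow> real"
  assumes "open W" "p0 \<in> W"
  and d1: "\<And>p. p \<in> W \<Longrightarrow> DERIV (\<lambda>t. u (t, snd p)) (fst p) :> ux p"
  and d2: "\<And>p. p \<in> W \<Longrightarrow> DERIV (\<lambda>t. u (fst p, t)) (snd p) :> uy p"
  and d3: "\<And>p. p \<in> W \<Longrightarrow> DERIV (\<lambda>t. ux (fst p, t)) (snd p) :> uxy p"
  and d4: "\<And>p. p \<in> W \<Longrightarrow> DERIV (\<lambda>t. uy (t, snd p)) (fst p) :> uyx p"
  and cx: "isCont uxy p0" and cy: "isCont uyx p0"
  shows "uxy p0 = uyx p0"
proof (rule ccontr)
  assume ne: "uxy p0 \<noteq> uyx p0"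
  define e where "e = \<bar>uxy p0 - uyx p0\<bar> / 2"
  have e: "e > 0" using ne by (simp add: e_def)
  obtain r where r: "r > 0" "ball p0 r \<subseteq> W" using assms(1,2) open_contains_ball by blast
  obtain r1 where r1: "r1 > 0" "\<forall>p. dist p p0 < r1 \<longrightarrow> dist (uxy p) (uxy p0) < e"
    using cx e unfolding continuous_at_eps_delta by blast
  obtain r2 where r2: "r2 > 0" "\<forall>p. dist p p0 < r2 \<longrightarrow> dist (uyx p) (uyx p0) < e"
    using cy e unfolding continuous_at_eps_delta by blast
  define h where "h = min r (min r1 r2) / 2"
  have h: "h > 0" using r r1 r2 by (simp add: h_def)
  obtain x y where p0: "p0 = (x, y)" by (cases p0)
  have inW: "(s, t) \<in> W" and in1: "dist (s, t) p0 < r1" and in2: "dist (s, t) p0 < r2"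
    if "x \<le> s" "s \<le> x + h" "y \<le> t" "t \<le> y + h" for s t
  proof -
    have "dist (s, t) p0 < 2 * h" using square_dist[OF h that] p0 by simp
    then show "(s, t) \<in> W" "dist (s, t) p0 < r1" "dist (s, t) p0 < r2"
      using r unfolding h_def by (auto simp: dist_commute)
  qed
  define D where "D = u (x+h, y+h) - u (x+h, y) - u (x, y+h) + u (x, y)"
  have D1: "DERIV (\<lambda>s. u (s, y+h) - u (s, y)) s :> ux (s, y+h) - ux (s, y)"
    if "x \<le> s" "s \<le> x + h" for s
    using d1[of "(s, y+h)"] d1[of "(s, y)"] inW[of s "y+h"] inW[of s y] that h
    by (auto intro!: DERIV_diff)
  obtain \<xi> where \<xi>: "x < \<xi>" "\<xi> < x + h"
    "(\<lambda>s. u (s, y+h) - u (s, y)) (x+h) - (\<lambda>s. u (s, y+h) - u (s, y)) x = (x + h - x) * (ux (\<xi>, y+h) - ux (\<xi>, y))"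
    using MVT2[of x "x+h" "\<lambda>s. u (s, y+h) - u (s, y)" "\<lambda>s. ux (s, y+h) - ux (s, y)", OF _ D1] h by auto
  have D2: "DERIV (\<lambda>t. ux (\<xi>, t)) t :> uxy (\<xi>, t)" if "y \<le> t" "t \<le> y + h" for t
    using d3[of "(\<xi>, t)"] inW[of \<xi> t] that \<xi> by auto
  obtain \<eta> where \<eta>: "y < \<eta>" "\<eta> < y + h"
    "ux (\<xi>, y+h) - ux (\<xi>, y) = (y + h - y) * uxy (\<xi>, \<eta>)"
    using MVT2[of y "y+h" "\<lambda>t. ux (\<xi>, t)" "\<lambda>t. uxy (\<xi>, t)", OF _ D2] h by auto
  have D3: "DERIV (\<lambda>t. u (x+h, t) - u (x, t)) t :> uy (x+h, t) - uy (x, t)"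
    if "y \<le> t" "t \<le> y + h" for t
    using d2[of "(x+h, t)"] d2[of "(x, t)"] inW[of "x+h" t] inW[of x t] that h
    by (auto intro!: DERIV_diff)
  obtain \<eta>' where \<eta>': "y < \<eta>'" "\<eta>' < y + h"
    "(\<lambda>t. u (x+h, t) - u (x, t)) (y+h) - (\<lambda>t. u (x+h, t) - u (x, t)) y = (y + h - y) * (uy (x+h, \<eta>') - uy (x, \<eta>'))"
    using MVT2[of y "y+h" "\<lambda>t. u (x+h, t) - u (x, t)" "\<lambda>t. uy (x+h, t) - uy (x, t)", OF _ D3] h by auto
  have D4: "DERIV (\<lambda>s. uy (s, \<eta>')) s :> uyx (s, \<eta>')" if "x \<le> s" "s \<le> x + h" for s
    using d4[of "(s, \<eta>')"] inW[of s \<eta>'] that \<eta>' by auto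
  obtain \<xi>' where \<xi>': "x < \<xi>'" "\<xi>' < x + h"
    "uy (x+h, \<eta>') - uy (x, \<eta>') = (x + h - x) * uyx (\<xi>', \<eta>')"
    using MVT2[of x "x+h" "\<lambda>s. uy (s, \<eta>')" "\<lambda>s. uyx (s, \<eta>')", OF _ D4] h by auto
  have "D = h * (h * uxy (\<xi>, \<eta>))" using \<xi>(3) \<eta>(3) by (simp add: D_def algebra_simps)
  moreover have "D = h * (h * uyx (\<xi>', \<eta>'))" using \<eta>'(3) \<xi>'(3) by (simp add: D_def algebra_simps)
  ultimately have eq: "uxy (\<xi>, \<eta>) = uyx (\<xi>', \<eta>')" using h by simp
  have "dist (uxy (\<xi>, \<eta>)) (uxy p0) < e" using r1 in1[of \<xi> \<eta>] \<xi> \<eta> by auto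
  moreover have "dist (uyx (\<xi>', \<eta>')) (uyx p0) < e" using r2 in2[of \<xi>' \<eta>'] \<xi>' \<eta>' by auto
  moreover have "\<bar>uxy p0 - uyx p0\<bar> \<le> \<bar>uxy p0 - uxy (\<xi>, \<eta>)\<bar> + \<bar>uxy (\<xi>, \<eta>) - uyx p0\<bar>"
    using abs_triangle_ineq[of "uxy p0 - uxy (\<xi>, \<eta>)" "uxy (\<xi>, \<eta>) - uyx p0"] by simp
  ultimately show False using eq unfolding e_def dist_real_def by (simp add: abs_minus_commute)
qed



lemma box_dist:
  fixes s t x0 y0 e :: real
  assumes "e > 0" "\<bar>s - x0\<bar> \<le> e/2" "\<bar>t - y0\<bar> \<le> e/2"
  shows "dist (s, t) (x0, y0) \<le> e"
proof -
  have "(s - x0)\<^sup>2 \<le> (e/2)\<^sup>2" using assms abs_le_square_iff[of "s - x0" "e/2"] by simp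
  moreover have "(t - y0)\<^sup>2 \<le> (e/2)\<^sup>2" using assms abs_le_square_iff[of "t - y0" "e/2"] by simp
  moreover have "(e/2)\<^sup>2 = e\<^sup>2 / 4" by (simp add: power_divide)
  moreover have "e\<^sup>2 \<ge> 0" by simp
  ultimately have "(s - x0)\<^sup>2 + (t - y0)\<^sup>2 \<le> e\<^sup>2" by linarith
  then have A: "sqrt ((s - x0)\<^sup>2 + (t - y0)\<^sup>2) \<le> sqrt (e\<^sup>2)" by (rule real_sqrt_le_mono)
  have B: "sqrt (e\<^sup>2) = e" using assms by simp
  have C: "dist (s, t) (x0, y0) = sqrt ((s - x0)\<^sup>2 + (t - y0)\<^sup>2)" by (simp add: dist_Pair_Pair dist_real_def)
  show ?thesis unfolding C using A unfolding B .
qed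

lemma dist_same_snd: "dist (s, t) (x, t) = \<bar>s - (x::real)\<bar>" for t :: real
  by (simp add: dist_Pair_Pair dist_real_def)

lemma ift_setup:
  fixes \<phi> \<phi>x \<phi>y :: "real\<times>real \<Rightarrow> real"
  assumes W: "open W" "p0 \<in> W"
  and dx: "\<And>p. p \<in> W \<Longrightarrow> DERIV (\<lambda>t. \<phi> (t, snd p)) (fst p) :> \<phi>x p"
  and dy: "\<And>p. p \<in> W \<Longrightarrow> DERIV (\<lambda>t. \<phi> (fst p, t)) (snd p) :> \<phi>y p"
  and c\<phi>: "continuous_on W \<phi>" and cx: "continuous_on W \<phi>x" and cy: "continuous_on W \<phi>y"
  and z: "\<phi> p0 = 0" and pos: "\<phi>y p0 > 0"
  shows "\<exists>e c K \<eta>'. e > 0 \<and> c > 0 \<and> 0 < \<eta>' \<and> \<eta>' \<le> e/2 \<and> cball p0 e \<subseteq> W \<and>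
     (\<forall>p\<in>cball p0 e. \<phi>y p \<ge> c \<and> \<bar>\<phi>x p\<bar> \<le> K) \<and>
     (\<forall>s. \<bar>s - fst p0\<bar> < \<eta>' \<longrightarrow> \<phi> (s, snd p0 + e/2) > 0 \<and> \<phi> (s, snd p0 - e/2) < 0)"
proof -
  obtain x0 y0 where p0: "p0 = (x0, y0)" by (cases p0)
  define c where "c = \<phi>y p0 / 2"
  have c: "c > 0" using pos by (simp add: c_def)
  obtain r where r: "r > 0" "ball p0 r \<subseteq> W" using W open_contains_ball by blast
  have "isCont \<phi>y p0" using cy W continuous_on_eq_continuous_at by blast
  then obtain d where d: "d > 0" "\<forall>p. dist p p0 < d \<longrightarrow> dist (\<phi>y p) (\<phi>y p0) < c"
    using c unfolding continuous_at_eps_delta by blast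
  define e where "e = min (r/2) (d/2)"
  have e: "e > 0" using r d by (simp add: e_def)
  have cb: "cball p0 e \<subseteq> W" using r e unfolding e_def by (auto simp: subset_iff dist_commute)
  have cyc: "\<phi>y p \<ge> c" if "p \<in> cball p0 e" for p
  proof -
    have "dist p p0 < d" using that e d unfolding e_def by (auto simp: dist_commute)
    then have "\<bar>\<phi>y p - \<phi>y p0\<bar> < c" using d(2)[rule_format, of p] by (simp add: dist_real_def)
    then show ?thesis unfolding c_def by linarith
  qed
  have "compact (\<phi>x ` cball p0 e)"
    by (rule compact_continuous_image) (use continuous_on_subset[OF cx cb] in auto)
  then obtain K where K: "\<forall>v\<in>\<phi>x ` cball p0 e. norm v \<le> K" using compact_imp_bounded bounded_iff by metis
  have inbox: "(s, t) \<in> cball p0 e" if "\<bar>s - x0\<bar> \<le> e/2" "\<bar>t - y0\<bar> \<le> e/2" for s t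
    using box_dist[OF e that] p0 by (simp add: dist_commute)
  have up: "\<phi> (x0, y0 + e/2) > 0"
  proof -
    have der: "DERIV (\<lambda>t. \<phi> (x0, t)) t :> \<phi>y (x0, t)" if "y0 \<le> t" "t \<le> y0 + e/2" for t
      using dy[of "(x0, t)"] inbox[of x0 t] cb that e by auto
    obtain z where zz: "y0 < z" "z < y0 + e/2" "\<phi> (x0, y0 + e/2) - \<phi> (x0, y0) = (y0 + e/2 - y0) * \<phi>y (x0, z)"
      using MVT2[of y0 "y0 + e/2" "\<lambda>t. \<phi> (x0, t)" "\<lambda>t. \<phi>y (x0, t)", OF _ der] e by auto
    have "\<phi>y (x0, z) \<ge> c" using cyc inbox[of x0 z] zz e by auto
    then have "e/2 * \<phi>y (x0, z) > 0" using c e by (intro mult_pos_pos) auto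
    then show ?thesis using zz z p0 by simp
  qed
  have down: "\<phi> (x0, y0 - e/2) < 0"
  proof -
    have der: "DERIV (\<lambda>t. \<phi> (x0, t)) t :> \<phi>y (x0, t)" if "y0 - e/2 \<le> t" "t \<le> y0" for t
      using dy[of "(x0, t)"] inbox[of x0 t] cb that e by auto
    obtain z where zz: "y0 - e/2 < z" "z < y0" "\<phi> (x0, y0) - \<phi> (x0, y0 - e/2) = (y0 - (y0 - e/2)) * \<phi>y (x0, z)"
      using MVT2[of "y0 - e/2" y0 "\<lambda>t. \<phi> (x0, t)" "\<lambda>t. \<phi>y (x0, t)", OF _ der] e by auto
    have "\<phi>y (x0, z) \<ge> c" using cyc inbox[of x0 z] zz e by auto
    then have "e/2 * \<phi>y (x0, z) > 0" using c e by (intro mult_pos_pos) auto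
    then show ?thesis using zz z p0 by simp
  qed
  have "(x0, y0 + e/2) \<in> W" using inbox[of x0 "y0 + e/2"] cb e by auto
  then have "isCont \<phi> (x0, y0 + e/2)" using c\<phi> W continuous_on_eq_continuous_at by blast
  then obtain d1 where d1: "d1 > 0" "\<forall>p. dist p (x0, y0 + e/2) < d1 \<longrightarrow> dist (\<phi> p) (\<phi> (x0, y0 + e/2)) < \<phi> (x0, y0 + e/2)"
    using up unfolding continuous_at_eps_delta by blast
  have "(x0, y0 - e/2) \<in> W" using inbox[of x0 "y0 - e/2"] cb e by auto
  then have "isCont \<phi> (x0, y0 - e/2)" using c\<phi> W continuous_on_eq_continuous_at by blast
  then obtain d2 where d2: "d2 > 0" "\<forall>p. dist p (x0, y0 - e/2) < d2 \<longrightarrow> dist (\<phi> p) (\<phi> (x0, y0 - e/2)) < - \<phi> (x0, y0 - e/2)"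
    using down unfolding continuous_at_eps_delta by (metis neg_0_less_iff_less)
  define \<eta>' where "\<eta>' = min (e/2) (min d1 d2)"
  have "\<eta>' > 0" "\<eta>' \<le> e/2" using e d1 d2 by (auto simp: \<eta>'_def)
  moreover have "\<phi> (s, snd p0 + e/2) > 0 \<and> \<phi> (s, snd p0 - e/2) < 0" if "\<bar>s - fst p0\<bar> < \<eta>'" for s
  proof -
    have "\<bar>\<phi> (s, y0 + e/2) - \<phi> (x0, y0 + e/2)\<bar> < \<phi> (x0, y0 + e/2)"
      using d1 that p0 unfolding \<eta>'_def by (auto simp: dist_same_snd dist_real_def)
    moreover have "\<bar>\<phi> (s, y0 - e/2) - \<phi> (x0, y0 - e/2)\<bar> < - \<phi> (x0, y0 - e/2)"
      using d2 that p0 unfolding \<eta>'_def by (auto simp: dist_same_snd dist_real_def)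
    ultimately show ?thesis using p0 by auto
  qed
  ultimately show ?thesis using e c cb cyc K by (intro exI[of _ e] exI[of _ c] exI[of _ K] exI[of _ \<eta>']) auto
qed



lemma squeeze_at:
  fixes f :: "real \<Rightarrow> real"
  assumes "eventually (\<lambda>s. \<bar>f s - a\<bar> \<le> M * \<bar>s - s1\<bar>) (at s1)"
  shows "(f \<longlongrightarrow> a) (at s1)"
proof -
  have "((\<lambda>s. M * \<bar>s - s1\<bar>) \<longlongrightarrow> M * \<bar>s1 - s1\<bar>) (at s1)"
    by (intro tendsto_intros)
  then have "((\<lambda>s. M * \<bar>s - s1\<bar>) \<longlongrightarrow> 0) (at s1)" by simp
  then have "((\<lambda>s. f s - a) \<longlongrightarrow> 0) (at s1)"
    by (rule Lim_null_comparison[rotated]) (use assms in simp)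
  then show ?thesis by (simp add: LIM_zero_iff)
qed

lemma eventually_in_interval:
  fixes s1 a b :: real
  assumes "a < s1" "s1 < b"
  shows "eventually (\<lambda>s. a < s \<and> s < b \<and> s \<noteq> s1) (at s1)"
proof -
  have "min (s1 - a) (b - s1) > 0" using assms by simp
  from eventually_at_ball'[OF this, of s1 UNIV]
  show ?thesis by (rule eventually_mono) (auto simp: dist_real_def)
qed



lemma ift_arc_pos:
  fixes \<phi> \<phi>x \<phi>y :: "real\<times>real \<Rightarrow> real"
  assumes W: "open W" "p0 \<in> W"
  and dx: "\<And>p. p \<in> W \<Longrightarrow> DERIV (\<lambda>t. \<phi> (t, snd p)) (fst p) :> \<phi>x p"
  and dy: "\<And>p. p \<in> W \<Longrightarrow> DERIV (\<lambda>t. \<phi> (fst p, t)) (snd p) :> \<phi>y p"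
  and c\<phi>: "continuous_on W \<phi>" and cx: "continuous_on W \<phi>x" and cy: "continuous_on W \<phi>y"
  and z: "\<phi> p0 = 0" and pos: "\<phi>y p0 > 0"
  shows "\<exists>V. open V \<and> p0 \<in> V \<and> V \<subseteq> W \<and> C1_arc_through (V \<inter> {p. \<phi> p = 0}) p0"
proof -
  obtain e c K \<eta>' where e: "e > 0" and c: "c > 0" and \<eta>': "0 < \<eta>'" "\<eta>' \<le> e/2"
    and cb: "cball p0 e \<subseteq> W" and cK: "\<forall>p\<in>cball p0 e. \<phi>y p \<ge> c \<and> \<bar>\<phi>x p\<bar> \<le> K"
    and sgn: "\<forall>s. \<bar>s - fst p0\<bar> < \<eta>' \<longrightarrow> \<phi> (s, snd p0 + e/2) > 0 \<and> \<phi> (s, snd p0 - e/2) < 0"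
    using ift_setup[OF assms] by blast
  obtain x0 y0 where p0: "p0 = (x0, y0)" by (cases p0)
  define \<eta> where "\<eta> = e/2"
  have \<eta>: "\<eta> > 0" "\<eta>' \<le> \<eta>" using e \<eta>' by (auto simp: \<eta>_def)
  have inbox: "(s, t) \<in> cball p0 e" if "\<bar>s - x0\<bar> \<le> \<eta>" "\<bar>t - y0\<bar> \<le> \<eta>" for s t
    using box_dist[OF e, of s x0 t y0] that p0 by (simp add: dist_commute \<eta>_def)
  have inW: "(s, t) \<in> W" if "\<bar>s - x0\<bar> \<le> \<eta>" "\<bar>t - y0\<bar> \<le> \<eta>" for s t
    using inbox[OF that] cb by auto
  have Kb: "\<bar>\<phi>x (s, t)\<bar> \<le> K" and cb2: "\<phi>y (s, t) \<ge> c"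
    if "\<bar>s - x0\<bar> \<le> \<eta>" "\<bar>t - y0\<bar> \<le> \<eta>" for s t
    using inbox[OF that] cK by auto
  define I where "I = {x0 - \<eta>'<..<x0 + \<eta>'}"
  define J where "J = {y0 - \<eta><..<y0 + \<eta>}"
  have sI: "\<bar>s - x0\<bar> < \<eta>'" if "s \<in> I" for s using that by (auto simp: I_def abs_less_iff)
  have sI': "\<bar>s - x0\<bar> \<le> \<eta>" if "s \<in> I" for s using sI[OF that] \<eta> by linarith
  have mono: "\<phi> (s, t1) < \<phi> (s, t2)"
    if s: "s \<in> I" and t: "y0 - \<eta> \<le> t1" "t1 < t2" "t2 \<le> y0 + \<eta>" for s t1 t2
  proof -
    have der: "DERIV (\<lambda>t. \<phi> (s, t)) t :> \<phi>y (s, t)" if "t1 \<le> t" "t \<le> t2" for t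
      using dy[of "(s, t)"] inW[of s t] sI'[OF s] t that by (auto simp: abs_le_iff)
    obtain zz where zz: "t1 < zz" "zz < t2" "\<phi> (s, t2) - \<phi> (s, t1) = (t2 - t1) * \<phi>y (s, zz)"
      using MVT2[of t1 t2 "\<lambda>t. \<phi> (s, t)" "\<lambda>t. \<phi>y (s, t)", OF t(2) der] by auto
    have "\<phi>y (s, zz) \<ge> c" using cb2[of s zz] sI'[OF s] zz t by (auto simp: abs_le_iff)
    then have "(t2 - t1) * \<phi>y (s, zz) > 0" using c t by (intro mult_pos_pos) auto
    then show ?thesis using zz by linarith
  qed
  have ex: "\<exists>t. y0 - \<eta> < t \<and> t < y0 + \<eta> \<and> \<phi> (s, t) = 0" if s: "s \<in> I" for s
  proof -
    have pm: "\<phi> (s, y0 + \<eta>) > 0" "\<phi> (s, y0 - \<eta>) < 0" using sgn sI[OF s] p0 by (auto simp: \<eta>_def)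
    have "\<forall>t. y0 - \<eta> \<le> t \<and> t \<le> y0 + \<eta> \<longrightarrow> isCont (\<lambda>t. \<phi> (s, t)) t"
    proof (intro allI impI)
      fix t assume "y0 - \<eta> \<le> t \<and> t \<le> y0 + \<eta>"
      then have "DERIV (\<lambda>t. \<phi> (s, t)) t :> \<phi>y (s, t)"
        using dy[of "(s, t)"] inW[of s t] sI'[OF s] by (auto simp: abs_le_iff)
      then show "isCont (\<lambda>t. \<phi> (s, t)) t" by (rule DERIV_isCont)
    qed
    then obtain t where t: "y0 - \<eta> \<le> t" "t \<le> y0 + \<eta>" "\<phi> (s, t) = 0"
      using IVT[of "\<lambda>t. \<phi> (s, t)" "y0 - \<eta>" 0 "y0 + \<eta>"] pm \<eta> by auto
    have "t \<noteq> y0 - \<eta>" "t \<noteq> y0 + \<eta>" using t pm by auto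
    then show ?thesis using t by (intro exI[of _ t]) auto
  qed
  have uniq: "t1 = t2" if s: "s \<in> I" and "y0 - \<eta> < t1" "t1 < y0 + \<eta>" "\<phi> (s, t1) = 0"
    "y0 - \<eta> < t2" "t2 < y0 + \<eta>" "\<phi> (s, t2) = 0" for s t1 t2
  proof (rule ccontr)
    assume "t1 \<noteq> t2"
    then consider "t1 < t2" | "t2 < t1" by linarith
    then show False
    proof cases
      case 1 then show ?thesis using mono[OF s, of t1 t2] that by auto
    next
      case 2 then show ?thesis using mono[OF s, of t2 t1] that by auto
    qed
  qed
  define g where "g s = (THE t. y0 - \<eta> < t \<and> t < y0 + \<eta> \<and> \<phi> (s, t) = 0)" for s
  have gP: "y0 - \<eta> < g s \<and> g s < y0 + \<eta> \<and> \<phi> (s, g s) = 0" if s: "s \<in> I" for s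
  proof -
    obtain t where t: "y0 - \<eta> < t \<and> t < y0 + \<eta> \<and> \<phi> (s, t) = 0" using ex[OF s] by blast
    have "g s = t" unfolding g_def
      by (rule the_equality) (use t uniq[OF s] in blast)+
    then show ?thesis using t by simp
  qed
  have gU: "t = g s" if s: "s \<in> I" and "y0 - \<eta> < t" "t < y0 + \<eta>" "\<phi> (s, t) = 0" for s t
    using uniq[OF s, of t "g s"] gP[OF s] that by auto
  have gJ: "\<bar>g s - y0\<bar> \<le> \<eta>" if "s \<in> I" for s using gP[OF that] by (auto simp: abs_le_iff)
  have x0I: "x0 \<in> I" using \<eta>' by (simp add: I_def)
  have gx0: "g x0 = y0" using gU[OF x0I, of y0] z p0 \<eta> by auto
  have key: "\<exists>\<xi> \<zeta>. min s1 s2 \<le> \<xi> \<and> \<xi> \<le> max s1 s2 \<and> min (g s1) (g s2) \<le> \<zeta> \<and> \<zeta> \<le> max (g s1) (g s2) \<and>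
      (g s2 - g s1) * \<phi>y (s1, \<zeta>) = - ((s2 - s1) * \<phi>x (\<xi>, g s2))"
    if s1: "s1 \<in> I" and s2: "s2 \<in> I" for s1 s2
  proof -
    have "\<exists>\<xi>. min s1 s2 \<le> \<xi> \<and> \<xi> \<le> max s1 s2 \<and> (\<lambda>t. \<phi> (t, g s2)) s2 - (\<lambda>t. \<phi> (t, g s2)) s1 = (s2 - s1) * (\<lambda>t. \<phi>x (t, g s2)) \<xi>"
    proof (rule mvt_any)
      fix t assume t: "min s1 s2 \<le> t" "t \<le> max s1 s2"
      then have "t \<in> I" using s1 s2 by (auto simp: I_def)
      then show "DERIV (\<lambda>t. \<phi> (t, g s2)) t :> \<phi>x (t, g s2)"
        using dx[of "(t, g s2)"] inW[of t "g s2"] sI' gJ[OF s2] by auto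
    qed
    then obtain \<xi> where \<xi>: "min s1 s2 \<le> \<xi>" "\<xi> \<le> max s1 s2" "\<phi> (s2, g s2) - \<phi> (s1, g s2) = (s2 - s1) * \<phi>x (\<xi>, g s2)"
      by auto
    have "\<exists>\<zeta>. min (g s1) (g s2) \<le> \<zeta> \<and> \<zeta> \<le> max (g s1) (g s2) \<and> (\<lambda>t. \<phi> (s1, t)) (g s2) - (\<lambda>t. \<phi> (s1, t)) (g s1) = (g s2 - g s1) * (\<lambda>t. \<phi>y (s1, t)) \<zeta>"
    proof (rule mvt_any)
      fix t assume t: "min (g s1) (g s2) \<le> t" "t \<le> max (g s1) (g s2)"
      then have "\<bar>t - y0\<bar> \<le> \<eta>" using gJ[OF s1] gJ[OF s2] by (auto simp: abs_le_iff)
      then show "DERIV (\<lambda>t. \<phi> (s1, t)) t :> \<phi>y (s1, t)"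
        using dy[of "(s1, t)"] inW[of s1 t] sI'[OF s1] by auto
    qed
    then obtain \<zeta> where \<zeta>: "min (g s1) (g s2) \<le> \<zeta>" "\<zeta> \<le> max (g s1) (g s2)" "\<phi> (s1, g s2) - \<phi> (s1, g s1) = (g s2 - g s1) * \<phi>y (s1, \<zeta>)"
      by auto
    have "\<phi> (s2, g s2) = 0" "\<phi> (s1, g s1) = 0" using gP s1 s2 by auto
    then have "(g s2 - g s1) * \<phi>y (s1, \<zeta>) = - ((s2 - s1) * \<phi>x (\<xi>, g s2))" using \<xi>(3) \<zeta>(3) by linarith
    then show ?thesis using \<xi> \<zeta> by blast
  qed
  have lip: "\<bar>g s2 - g s1\<bar> \<le> (K / c) * \<bar>s2 - s1\<bar>" if s1: "s1 \<in> I" and s2: "s2 \<in> I" for s1 s2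
  proof -
    obtain \<xi> \<zeta> where \<xi>\<zeta>: "min s1 s2 \<le> \<xi>" "\<xi> \<le> max s1 s2" "min (g s1) (g s2) \<le> \<zeta>" "\<zeta> \<le> max (g s1) (g s2)"
      "(g s2 - g s1) * \<phi>y (s1, \<zeta>) = - ((s2 - s1) * \<phi>x (\<xi>, g s2))"
      using key[OF s1 s2] by blast
    have \<xi>I: "\<xi> \<in> I" using \<xi>\<zeta> s1 s2 by (auto simp: I_def)
    have \<zeta>J: "\<bar>\<zeta> - y0\<bar> \<le> \<eta>" using \<xi>\<zeta> gJ[OF s1] gJ[OF s2] by (auto simp: abs_le_iff)
    have A: "\<phi>y (s1, \<zeta>) \<ge> c" using cb2[OF sI'[OF s1] \<zeta>J] .
    have B: "\<bar>\<phi>x (\<xi>, g s2)\<bar> \<le> K" using Kb[OF sI'[OF \<xi>I] gJ[OF s2]] .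
    have "\<bar>g s2 - g s1\<bar> * c \<le> \<bar>g s2 - g s1\<bar> * \<phi>y (s1, \<zeta>)" using A by (intro mult_left_mono) auto
    also have "\<dots> = \<bar>(g s2 - g s1) * \<phi>y (s1, \<zeta>)\<bar>" using A c by (simp add: abs_mult)
    also have "\<dots> = \<bar>s2 - s1\<bar> * \<bar>\<phi>x (\<xi>, g s2)\<bar>" using \<xi>\<zeta>(5) by (simp add: abs_mult)
    also have "\<dots> \<le> \<bar>s2 - s1\<bar> * K" using B by (intro mult_left_mono) auto
    finally show ?thesis using c by (simp add: field_simps)
  qed
  define G where "G s = - (\<phi>x (s, g s) / \<phi>y (s, g s))" for s
  have gcont: "isCont g s1" if s1: "s1 \<in> I" for s1
  proof -
    have "eventually (\<lambda>s. \<bar>g s - g s1\<bar> \<le> (K / c) * \<bar>s - s1\<bar>) (at s1)"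
    proof (rule eventually_mono[OF eventually_in_interval[of "x0 - \<eta>'" s1 "x0 + \<eta>'"]])
      show "x0 - \<eta>' < s1" "s1 < x0 + \<eta>'" using s1 by (auto simp: I_def)
      fix s assume "x0 - \<eta>' < s \<and> s < x0 + \<eta>' \<and> s \<noteq> s1"
      then have "s \<in> I" by (auto simp: I_def)
      then show "\<bar>g s - g s1\<bar> \<le> (K / c) * \<bar>s - s1\<bar>" using lip[OF s1] by blast
    qed
    then have "(g \<longlongrightarrow> g s1) (at s1)" by (rule squeeze_at)
    then show ?thesis by (simp add: isCont_def)
  qed
  have gder: "DERIV g s1 :> G s1" if s1: "s1 \<in> I" for s1
  proof -
    define P where "P s \<xi> \<zeta> \<longleftrightarrow> min s1 s \<le> \<xi> \<and> \<xi> \<le> max s1 s \<and> min (g s1) (g s) \<le> \<zeta> \<and> \<zeta> \<le> max (g s1) (g s) \<and>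
      (g s - g s1) * \<phi>y (s1, \<zeta>) = - ((s - s1) * \<phi>x (\<xi>, g s))" for s \<xi> \<zeta>
    define X where "X s = fst (SOME q. P s (fst q) (snd q))" for s
    define Z where "Z s = snd (SOME q. P s (fst q) (snd q))" for s
    have XZ: "P s (X s) (Z s)" if "s \<in> I" for s
    proof -
      have "\<exists>q. P s (fst q) (snd q)" using key[OF s1 that] unfolding P_def by auto
      then show ?thesis unfolding X_def Z_def by (rule someI_ex)
    qed
    have ev: "eventually (\<lambda>s. s \<in> I \<and> s \<noteq> s1) (at s1)"
      using eventually_in_interval[of "x0 - \<eta>'" s1 "x0 + \<eta>'"] s1
      by (auto simp: I_def elim!: eventually_mono)
    have tX: "(X \<longlongrightarrow> s1) (at s1)"
    proof (rule squeeze_at[where M=1], rule eventually_mono[OF ev])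
      fix s assume s: "s \<in> I \<and> s \<noteq> s1"
      then have "min s1 s \<le> X s" "X s \<le> max s1 s" using XZ[of s] by (auto simp: P_def)
      then show "\<bar>X s - s1\<bar> \<le> 1 * \<bar>s - s1\<bar>" by (auto simp: min_def max_def split: if_splits)
    qed
    have tg: "(g \<longlongrightarrow> g s1) (at s1)" using gcont[OF s1] by (simp add: isCont_def)
    have tZ: "(Z \<longlongrightarrow> g s1) (at s1)"
    proof (rule squeeze_at[where M="K/c"], rule eventually_mono[OF ev])
      fix s assume s: "s \<in> I \<and> s \<noteq> s1"
      have "\<bar>Z s - g s1\<bar> \<le> \<bar>g s - g s1\<bar>" using XZ[of s] s by (auto simp: P_def abs_le_iff)
      also have "\<dots> \<le> K / c * \<bar>s - s1\<bar>" using lip[OF s1, of s] s by auto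
      finally show "\<bar>Z s - g s1\<bar> \<le> K / c * \<bar>s - s1\<bar>" .
    qed
    have p1W: "(s1, g s1) \<in> W" using inW[OF sI'[OF s1] gJ[OF s1]] .
    have icx: "isCont \<phi>x (s1, g s1)" using cx W(1) p1W continuous_on_eq_continuous_at by blast
    have icy: "isCont \<phi>y (s1, g s1)" using cy W(1) p1W continuous_on_eq_continuous_at by blast
    have ny: "\<phi>y (s1, g s1) \<noteq> 0" using cb2[OF sI'[OF s1] gJ[OF s1]] c by auto
    have t1: "((\<lambda>s. \<phi>x (X s, g s)) \<longlongrightarrow> \<phi>x (s1, g s1)) (at s1)"
      by (rule isCont_tendsto_compose[OF icx]) (intro tendsto_Pair tX tg)
    have t2: "((\<lambda>s. \<phi>y (s1, Z s)) \<longlongrightarrow> \<phi>y (s1, g s1)) (at s1)"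
      by (rule isCont_tendsto_compose[OF icy]) (intro tendsto_Pair tZ tendsto_const)
    have "((\<lambda>s. - (\<phi>x (X s, g s) / \<phi>y (s1, Z s))) \<longlongrightarrow> G s1) (at s1)"
      unfolding G_def by (intro tendsto_minus tendsto_divide t1 t2 ny)
    moreover have "eventually (\<lambda>s. - (\<phi>x (X s, g s) / \<phi>y (s1, Z s)) = (g s - g s1) / (s - s1)) (at s1)"
    proof (rule eventually_mono[OF ev])
      fix s assume s: "s \<in> I \<and> s \<noteq> s1"
      have PP: "P s (X s) (Z s)" using XZ s by auto
      have "\<bar>Z s - y0\<bar> \<le> \<eta>" using PP gJ[OF s1] gJ[of s] s by (auto simp: P_def abs_le_iff)
      then have "\<phi>y (s1, Z s) \<ge> c" using cb2[OF sI'[OF s1]] by auto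
      then have "\<phi>y (s1, Z s) \<noteq> 0" using c by auto
      moreover have "s - s1 \<noteq> 0" using s by auto
      ultimately show "- (\<phi>x (X s, g s) / \<phi>y (s1, Z s)) = (g s - g s1) / (s - s1)"
        using PP unfolding P_def by (simp add: field_simps)
    qed
    ultimately have "((\<lambda>s. (g s - g s1) / (s - s1)) \<longlongrightarrow> G s1) (at s1)"
      by (rule Lim_transform_eventually)
    then show ?thesis by (simp add: has_field_derivative_iff)
  qed
  have Gcont: "isCont G s1" if s1: "s1 \<in> I" for s1
  proof -
    have p1W: "(s1, g s1) \<in> W" using inW[OF sI'[OF s1] gJ[OF s1]] .
    have icx: "isCont \<phi>x (s1, g s1)" using cx W(1) p1W continuous_on_eq_continuous_at by blast
    have icy: "isCont \<phi>y (s1, g s1)" using cy W(1) p1W continuous_on_eq_continuous_at by blast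
    have ny: "\<phi>y (s1, g s1) \<noteq> 0" using cb2[OF sI'[OF s1] gJ[OF s1]] c by auto
    have ip: "isCont (\<lambda>s. (s, g s)) s1" by (intro continuous_intros gcont s1)
    have "isCont (\<lambda>s. \<phi>x (s, g s)) s1" by (rule isCont_o2[OF ip icx])
    moreover have "isCont (\<lambda>s. \<phi>y (s, g s)) s1" by (rule isCont_o2[OF ip icy])
    ultimately show ?thesis unfolding G_def using ny by (intro continuous_intros) auto
  qed
  define \<gamma> where "\<gamma> t = (x0 + t, g (x0 + t))" for t
  define \<gamma>' where "\<gamma>' t = (1::real, G (x0 + t))" for t
  define V where "V = I \<times> J"
  have "open V" unfolding V_def I_def J_def by (intro open_Times) auto
  moreover have "p0 \<in> V" using p0 \<eta> \<eta>' by (auto simp: V_def I_def J_def)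
  moreover have "V \<subseteq> W"
  proof
    fix p assume "p \<in> V"
    then obtain s t where "p = (s, t)" "s \<in> I" "t \<in> J" by (auto simp: V_def)
    then show "p \<in> W" using inW[of s t] sI' by (auto simp: J_def abs_le_iff)
  qed
  moreover have "C1_arc_through (V \<inter> {p. \<phi> p = 0}) p0"
    unfolding C1_arc_through_def
  proof (intro exI conjI)
    show "- \<eta>' < 0" "0 < \<eta>'" using \<eta>' by auto
    have tI: "x0 + t \<in> I" if "t \<in> {- \<eta>'<..<\<eta>'}" for t using that by (auto simp: I_def)
    show "\<forall>t\<in>{- \<eta>'<..<\<eta>'}. (\<gamma> has_vector_derivative \<gamma>' t) (at t) \<and> \<gamma>' t \<noteq> 0"
    proof
      fix t assume t: "t \<in> {- \<eta>'<..<\<eta>'}"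
      have d1: "((\<lambda>t. x0 + t) has_vector_derivative 1) (at t)"
        by (auto intro!: derivative_eq_intros simp: has_real_derivative_iff_has_vector_derivative[symmetric])
      have "DERIV (\<lambda>t. g (x0 + t)) t :> G (x0 + t) * 1"
        by (rule DERIV_chain'[of "\<lambda>t. x0 + t", OF _ gder[OF tI[OF t]]]) (auto intro!: derivative_eq_intros)
      then have d2: "((\<lambda>t. g (x0 + t)) has_vector_derivative G (x0 + t)) (at t)"
        by (simp add: has_real_derivative_iff_has_vector_derivative)
      show "(\<gamma> has_vector_derivative \<gamma>' t) (at t) \<and> \<gamma>' t \<noteq> 0"
        unfolding \<gamma>_def \<gamma>'_def using has_vector_derivative_Pair[OF d1 d2] by (simp add: zero_prod_def)
    qed
    show "continuous_on {- \<eta>'<..<\<eta>'} \<gamma>'"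
    proof (rule continuous_at_imp_continuous_on, rule ballI)
      fix t assume t: "t \<in> {- \<eta>'<..<\<eta>'}"
      have "isCont (\<lambda>t. G (x0 + t)) t" by (rule isCont_o2[where f="\<lambda>t. x0 + t", OF _ Gcont[OF tI[OF t]]]) (intro continuous_intros)
      then show "isCont \<gamma>' t" unfolding \<gamma>'_def by (intro continuous_intros)
    qed
    show "inj_on \<gamma> {- \<eta>'<..<\<eta>'}" by (rule inj_onI) (auto simp: \<gamma>_def)
    show "\<gamma> 0 = p0" using gx0 p0 by (simp add: \<gamma>_def)
    show "V \<inter> {p. \<phi> p = 0} = \<gamma> ` {- \<eta>'<..<\<eta>'}"
    proof
      show "V \<inter> {p. \<phi> p = 0} \<subseteq> \<gamma> ` {- \<eta>'<..<\<eta>'}"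
      proof
        fix p assume p: "p \<in> V \<inter> {p. \<phi> p = 0}"
        then obtain s t where st: "p = (s, t)" "s \<in> I" "t \<in> J" "\<phi> (s, t) = 0" by (auto simp: V_def)
        then have "t = g s" using gU[of s t] by (auto simp: J_def)
        then have "p = \<gamma> (s - x0)" using st by (simp add: \<gamma>_def)
        moreover have "s - x0 \<in> {- \<eta>'<..<\<eta>'}" using st by (auto simp: I_def)
        ultimately show "p \<in> \<gamma> ` {- \<eta>'<..<\<eta>'}" by blast
      qed
      show "\<gamma> ` {- \<eta>'<..<\<eta>'} \<subseteq> V \<inter> {p. \<phi> p = 0}"
      proof
        fix p assume "p \<in> \<gamma> ` {- \<eta>'<..<\<eta>'}"
        then obtain t where t: "t \<in> {- \<eta>'<..<\<eta>'}" "p = \<gamma> t" by blast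
        have "x0 + t \<in> I" using tI[OF t(1)] .
        then show "p \<in> V \<inter> {p. \<phi> p = 0}" using gP[of "x0 + t"] t by (auto simp: \<gamma>_def V_def J_def)
      qed
    qed
  qed
  ultimately show ?thesis by blast
qed



lemma ift_arc_y:
  fixes \<phi> \<phi>x \<phi>y :: "real\<times>real \<Rightarrow> real"
  assumes W: "open W" "p0 \<in> W"
  and dx: "\<And>p. p \<in> W \<Longrightarrow> DERIV (\<lambda>t. \<phi> (t, snd p)) (fst p) :> \<phi>x p"
  and dy: "\<And>p. p \<in> W \<Longrightarrow> DERIV (\<lambda>t. \<phi> (fst p, t)) (snd p) :> \<phi>y p"
  and c\<phi>: "continuous_on W \<phi>" and cx: "continuous_on W \<phi>x" and cy: "continuous_on W \<phi>y"
  and z: "\<phi> p0 = 0" and nz: "\<phi>y p0 \<noteq> 0"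
  shows "\<exists>V. open V \<and> p0 \<in> V \<and> V \<subseteq> W \<and> C1_arc_through (V \<inter> {p. \<phi> p = 0}) p0"
proof (cases "\<phi>y p0 > 0")
  case True
  then show ?thesis using ift_arc_pos[OF assms(1-8) True] by blast
next
  case False
  then have neg: "(\<lambda>p. - \<phi>y p) p0 > 0" using nz by auto
  have "\<exists>V. open V \<and> p0 \<in> V \<and> V \<subseteq> W \<and> C1_arc_through (V \<inter> {p. (\<lambda>p. - \<phi> p) p = 0}) p0"
    by (rule ift_arc_pos[of W p0 "\<lambda>p. - \<phi> p" "\<lambda>p. - \<phi>x p" "\<lambda>p. - \<phi>y p"])
       (use neg in \<open>auto intro!: DERIV_minus dx dy continuous_intros c\<phi> cx cy simp: z W\<close>)
  then show ?thesis by simp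
qed

lemma ift_arc:
  fixes \<phi> \<phi>x \<phi>y :: "real\<times>real \<Rightarrow> real"
  assumes W: "open W" "p0 \<in> W"
  and dx: "\<And>p. p \<in> W \<Longrightarrow> DERIV (\<lambda>t. \<phi> (t, snd p)) (fst p) :> \<phi>x p"
  and dy: "\<And>p. p \<in> W \<Longrightarrow> DERIV (\<lambda>t. \<phi> (fst p, t)) (snd p) :> \<phi>y p"
  and c\<phi>: "continuous_on W \<phi>" and cx: "continuous_on W \<phi>x" and cy: "continuous_on W \<phi>y"
  and z: "\<phi> p0 = 0" and nz: "\<phi>x p0 \<noteq> 0 \<or> \<phi>y p0 \<noteq> 0"
  shows "\<exists>V. open V \<and> p0 \<in> V \<and> V \<subseteq> W \<and> C1_arc_through (V \<inter> {p. \<phi> p = 0}) p0"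
proof (cases "\<phi>y p0 \<noteq> 0")
  case True
  then show ?thesis using ift_arc_y[OF assms(1-8)] by blast
next
  case False
  then have nx: "\<phi>x p0 \<noteq> 0" using nz by auto
  define W' where "W' = prod.swap -` W"
  have oW': "open W'" unfolding W'_def by (intro open_vimage W continuous_intros)
  have cs: "continuous_on W' prod.swap" by (intro continuous_intros)
  have sW: "prod.swap ` W' \<subseteq> W" by (auto simp: W'_def)
  have "\<exists>V. open V \<and> prod.swap p0 \<in> V \<and> V \<subseteq> W' \<and>
      C1_arc_through (V \<inter> {p. (\<lambda>p. \<phi> (prod.swap p)) p = 0}) (prod.swap p0)"
  proof (rule ift_arc_y[where \<phi>x="\<lambda>p. \<phi>y (prod.swap p)" and \<phi>y="\<lambda>p. \<phi>x (prod.swap p)"])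
    show "open W'" by fact
    show "prod.swap p0 \<in> W'" using W by (simp add: W'_def)
    fix p assume p: "p \<in> W'"
    then have "prod.swap p \<in> W" by (simp add: W'_def)
    then show "DERIV (\<lambda>t. \<phi> (prod.swap (t, snd p))) (fst p) :> \<phi>y (prod.swap p)"
      and "DERIV (\<lambda>t. \<phi> (prod.swap (fst p, t))) (snd p) :> \<phi>x (prod.swap p)"
      using dx[of "prod.swap p"] dy[of "prod.swap p"] by (cases p; simp)+
  next
    show "continuous_on W' (\<lambda>p. \<phi> (prod.swap p))" by (rule continuous_on_compose2[OF c\<phi> cs sW])
    show "continuous_on W' (\<lambda>p. \<phi>y (prod.swap p))" by (rule continuous_on_compose2[OF cy cs sW])
    show "continuous_on W' (\<lambda>p. \<phi>x (prod.swap p))" by (rule continuous_on_compose2[OF cx cs sW])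
    show "\<phi> (prod.swap (prod.swap p0)) = 0" using z by simp
    show "\<phi>x (prod.swap (prod.swap p0)) \<noteq> 0" using nx by simp
  qed
  then obtain V' where V': "open V'" "prod.swap p0 \<in> V'" "V' \<subseteq> W'"
    and arc: "C1_arc_through (V' \<inter> {p. \<phi> (prod.swap p) = 0}) (prod.swap p0)" by auto
  then obtain \<gamma> \<gamma>' a b where ab: "a < 0" "0 < b"
    and der: "\<forall>t\<in>{a<..<b}. (\<gamma> has_vector_derivative \<gamma>' t) (at t) \<and> \<gamma>' t \<noteq> 0"
    and cont: "continuous_on {a<..<b} \<gamma>'" and inj: "inj_on \<gamma> {a<..<b}"
    and g0: "\<gamma> 0 = prod.swap p0" and img: "V' \<inter> {p. \<phi> (prod.swap p) = 0} = \<gamma> ` {a<..<b}"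
    unfolding C1_arc_through_def by blast
  define V where "V = prod.swap -` V'"
  have "open V" unfolding V_def by (intro open_vimage V' continuous_intros)
  moreover have "p0 \<in> V" using V' by (simp add: V_def)
  moreover have "V \<subseteq> W" using V' by (auto simp: V_def W'_def)
  moreover have "C1_arc_through (V \<inter> {p. \<phi> p = 0}) p0"
    unfolding C1_arc_through_def
  proof (rule exI[of _ "\<lambda>t. prod.swap (\<gamma> t)"], rule exI[of _ "\<lambda>t. prod.swap (\<gamma>' t)"], rule exI[of _ a], rule exI[of _ b], intro conjI)
    show "a < 0" "0 < b" by fact+
    show "\<forall>t\<in>{a<..<b}. ((\<lambda>t. prod.swap (\<gamma> t)) has_vector_derivative prod.swap (\<gamma>' t)) (at t) \<and> prod.swap (\<gamma>' t) \<noteq> 0"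
    proof
      fix t assume t: "t \<in> {a<..<b}"
      have d: "(\<gamma> has_vector_derivative \<gamma>' t) (at t)" "\<gamma>' t \<noteq> 0" using der t by auto
      have d1: "((\<lambda>t. snd (\<gamma> t)) has_vector_derivative snd (\<gamma>' t)) (at t)"
        by (rule bounded_linear.has_vector_derivative[OF bounded_linear_snd d(1)])
      have d2: "((\<lambda>t. fst (\<gamma> t)) has_vector_derivative fst (\<gamma>' t)) (at t)"
        by (rule bounded_linear.has_vector_derivative[OF bounded_linear_fst d(1)])
      have "((\<lambda>t. (snd (\<gamma> t), fst (\<gamma> t))) has_vector_derivative (snd (\<gamma>' t), fst (\<gamma>' t))) (at t)"
        by (rule has_vector_derivative_Pair[OF d1 d2])
      moreover have "prod.swap (\<gamma>' t) \<noteq> 0" using d(2) by (cases "\<gamma>' t") (auto simp: zero_prod_def)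
      ultimately show "((\<lambda>t. prod.swap (\<gamma> t)) has_vector_derivative prod.swap (\<gamma>' t)) (at t) \<and> prod.swap (\<gamma>' t) \<noteq> 0"
        by (simp add: prod.swap_def)
    qed
    show "continuous_on {a<..<b} (\<lambda>t. prod.swap (\<gamma>' t))"
      by (rule continuous_on_compose2[OF continuous_on_swap cont]) auto
    show "inj_on (\<lambda>t. prod.swap (\<gamma> t)) {a<..<b}" using inj by (auto simp: inj_on_def) (metis greaterThanLessThan_iff swap_swap)
    show "prod.swap (\<gamma> 0) = p0" using g0 by simp
    show "V \<inter> {p. \<phi> p = 0} = (\<lambda>t. prod.swap (\<gamma> t)) ` {a<..<b}"
    proof -
      have "V \<inter> {p. \<phi> p = 0} = prod.swap ` (V' \<inter> {p. \<phi> (prod.swap p) = 0})"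
        by (auto simp: V_def image_iff) (metis IntI mem_Collect_eq swap_simp)
      also have "\<dots> = (\<lambda>t. prod.swap (\<gamma> t)) ` {a<..<b}" unfolding img by (simp add: image_image)
      finally show ?thesis .
    qed
  qed
  ultimately show ?thesis by blast
qed



lemma C1_dx:
  assumes "C1_on \<Omega> f" "p \<in> \<Omega>"
  shows "DERIV (\<lambda>t. f (t, snd p)) (fst p) :> px f p"
  using assms unfolding C1_on_def px_def by (simp add: DERIV_deriv_iff_field_differentiable)

lemma C1_dy:
  assumes "C1_on \<Omega> f" "p \<in> \<Omega>"
  shows "DERIV (\<lambda>t. f (fst p, t)) (snd p) :> py f p"
  using assms unfolding C1_on_def py_def by (simp add: DERIV_deriv_iff_field_differentiable)

lemma deriv_N:
  fixes A B :: "real \<Rightarrow> real"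
  assumes "DERIV A x :> A'" "DERIV B x :> B'" "(A x)\<^sup>2 + (B x)\<^sup>2 > 0"
  shows "DERIV (\<lambda>t. A t / sqrt ((A t)\<^sup>2 + (B t)\<^sup>2)) x :>
     (A' * (B x)\<^sup>2 - A x * B x * B') / (sqrt ((A x)\<^sup>2 + (B x)\<^sup>2)) ^ 3"
proof -
  define S where "S = sqrt ((A x)\<^sup>2 + (B x)\<^sup>2)"
  have S: "S > 0" "S\<^sup>2 = (A x)\<^sup>2 + (B x)\<^sup>2" using assms(3) by (auto simp: S_def)
  have d1: "DERIV (\<lambda>t. (A t)\<^sup>2 + (B t)\<^sup>2) x :> 2 * A x * A' + 2 * B x * B'"
    using DERIV_add[OF DERIV_power[OF assms(1), of 2] DERIV_power[OF assms(2), of 2]]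
    by (simp add: algebra_simps)
  have d2: "DERIV (\<lambda>t. sqrt ((A t)\<^sup>2 + (B t)\<^sup>2)) x :> inverse (sqrt ((A x)\<^sup>2 + (B x)\<^sup>2)) / 2 * (2 * A x * A' + 2 * B x * B')"
    by (rule DERIV_chain2[OF DERIV_real_sqrt[OF assms(3)] d1])
  have nz: "sqrt ((A x)\<^sup>2 + (B x)\<^sup>2) \<noteq> 0" using assms(3) by (metis less_irrefl real_sqrt_eq_zero_cancel_iff)
  have d3: "DERIV (\<lambda>t. A t / sqrt ((A t)\<^sup>2 + (B t)\<^sup>2)) x :>
     (A' * S - A x * (inverse S / 2 * (2 * A x * A' + 2 * B x * B'))) / (S * S)"
    unfolding S_def by (rule DERIV_divide[OF assms(1) d2 nz])
  have "DERIV (\<lambda>t. A t / sqrt ((A t)\<^sup>2 + (B t)\<^sup>2)) x :>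
     (A' * S - A x * ((2 * A x * A' + 2 * B x * B') / (2 * S))) / S\<^sup>2"
  proof -
    have "(A' * S - A x * (inverse S / 2 * (2 * A x * A' + 2 * B x * B'))) / (S * S) =
      (A' * S - A x * ((2 * A x * A' + 2 * B x * B') / (2 * S))) / S\<^sup>2"
      using S(1) by (simp add: power2_eq_square field_simps)
    then show ?thesis using d3 by simp
  qed
  moreover have "(A' * S - A x * ((2 * A x * A' + 2 * B x * B') / (2 * S))) / S\<^sup>2 =
      (A' * (B x)\<^sup>2 - A x * B x * B') / S ^ 3"
  proof -
    have n1: "A' * S\<^sup>2 - A x * (A x * A' + B x * B') = A' * (B x)\<^sup>2 - A x * B x * B'"
      using S(2) by (simp add: algebra_simps power2_eq_square)
    have e1: "A' * S - A x * ((2 * A x * A' + 2 * B x * B') / (2 * S)) = (A' * S\<^sup>2 - A x * (A x * A' + B x * B')) / S"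
      using S(1) by (simp add: field_simps power2_eq_square)
    show ?thesis unfolding e1 n1 using S(1) by (simp add: power2_eq_square power3_eq_cube)
  qed
  ultimately show ?thesis by (simp add: S_def)
qed



lemma Hcurv_formula:
  assumes C2: "C2_on \<Omega> u" and p: "p \<in> \<Omega>" and D: "Dlen u p \<noteq> 0"
  shows "Hcurv u p = (px (px u) p * (py u p + fst p)\<^sup>2
     - ((py (px u) p - 1) + (px (py u) p + 1)) * (px u p - snd p) * (py u p + fst p)
     + py (py u) p * (px u p - snd p)\<^sup>2) / (Dlen u p) ^ 3"
proof -
  obtain x y where xy: "p = (x, y)" by (cases p)
  have C1: "C1_on \<Omega> u" "C1_on \<Omega> (px u)" "C1_on \<Omega> (py u)" using C2 by (auto simp: C2_on_def)
  define aa where "aa = px u p - snd p"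
  define bb where "bb = py u p + fst p"
  have pos: "aa\<^sup>2 + bb\<^sup>2 > 0"
  proof -
    have "aa\<^sup>2 + bb\<^sup>2 \<noteq> 0" using D by (auto simp: Dlen_def aa_def bb_def)
    moreover have "aa\<^sup>2 + bb\<^sup>2 \<ge> 0" by simp
    ultimately show ?thesis by linarith
  qed
  have dA: "DERIV (\<lambda>t. px u (t, y) - y) x :> px (px u) p - 0"
    using DERIV_diff[OF C1_dx[OF C1(2) p] DERIV_const] xy by simp
  have dB: "DERIV (\<lambda>t. py u (t, y) + t) x :> px (py u) p + 1"
    using DERIV_add[OF C1_dx[OF C1(3) p] DERIV_ident] xy by simp
  have "DERIV (\<lambda>t. (px u (t, y) - y) / sqrt ((px u (t, y) - y)\<^sup>2 + (py u (t, y) + t)\<^sup>2)) x :>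
     ((px (px u) p - 0) * (py u (x, y) + x)\<^sup>2 - (px u (x, y) - y) * (py u (x, y) + x) * (px (py u) p + 1))
       / (sqrt ((px u (x, y) - y)\<^sup>2 + (py u (x, y) + x)\<^sup>2)) ^ 3"
    by (rule deriv_N[OF dA dB]) (use pos xy in \<open>simp add: aa_def bb_def\<close>)
  note der1 = this
  have fN1: "(\<lambda>t. N1 u (t, y)) = (\<lambda>t. (px u (t, y) - y) / sqrt ((px u (t, y) - y)\<^sup>2 + (py u (t, y) + t)\<^sup>2))"
    by (simp add: N1_def Dlen_def)
  have h1: "px (N1 u) p = (px (px u) p * bb\<^sup>2 - aa * bb * (px (py u) p + 1)) / (Dlen u p) ^ 3"
  proof -
    have "px (N1 u) p = deriv (\<lambda>t. N1 u (t, y)) x" using xy by (simp add: px_def[of "N1 u"])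
    also have "\<dots> = ((px (px u) p - 0) * (py u (x, y) + x)\<^sup>2 - (px u (x, y) - y) * (py u (x, y) + x) * (px (py u) p + 1))
       / (sqrt ((px u (x, y) - y)\<^sup>2 + (py u (x, y) + x)\<^sup>2)) ^ 3"
      unfolding fN1 by (rule DERIV_imp_deriv[OF der1])
    also have "\<dots> = (px (px u) p * bb\<^sup>2 - aa * bb * (px (py u) p + 1)) / (Dlen u p) ^ 3"
      using xy by (simp add: aa_def bb_def Dlen_def)
    finally show ?thesis .
  qed
  have dA2: "DERIV (\<lambda>t. px u (x, t) - t) y :> py (px u) p - 1"
    using DERIV_diff[OF C1_dy[OF C1(2) p] DERIV_ident] xy by simp
  have dB2: "DERIV (\<lambda>t. py u (x, t) + x) y :> py (py u) p + 0"
    using DERIV_add[OF C1_dy[OF C1(3) p] DERIV_const] xy by simp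
  have "DERIV (\<lambda>t. (py u (x, t) + x) / sqrt ((py u (x, t) + x)\<^sup>2 + (px u (x, t) - t)\<^sup>2)) y :>
     ((py (py u) p + 0) * (px u (x, y) - y)\<^sup>2 - (py u (x, y) + x) * (px u (x, y) - y) * (py (px u) p - 1))
       / (sqrt ((py u (x, y) + x)\<^sup>2 + (px u (x, y) - y)\<^sup>2)) ^ 3"
    by (rule deriv_N[OF dB2 dA2]) (use pos xy in \<open>simp add: aa_def bb_def add.commute\<close>)
  note der2 = this
  have fN2: "(\<lambda>t. N2 u (x, t)) = (\<lambda>t. (py u (x, t) + x) / sqrt ((py u (x, t) + x)\<^sup>2 + (px u (x, t) - t)\<^sup>2))"
    by (simp add: N2_def Dlen_def add.commute)
  have h2: "py (N2 u) p = (py (py u) p * aa\<^sup>2 - bb * aa * (py (px u) p - 1)) / (Dlen u p) ^ 3"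
  proof -
    have "py (N2 u) p = deriv (\<lambda>t. N2 u (x, t)) y" using xy by (simp add: py_def[of "N2 u"])
    also have "\<dots> = ((py (py u) p + 0) * (px u (x, y) - y)\<^sup>2 - (py u (x, y) + x) * (px u (x, y) - y) * (py (px u) p - 1))
       / (sqrt ((py u (x, y) + x)\<^sup>2 + (px u (x, y) - y)\<^sup>2)) ^ 3"
      unfolding fN2 by (rule DERIV_imp_deriv[OF der2])
    also have "\<dots> = (py (py u) p * aa\<^sup>2 - bb * aa * (py (px u) p - 1)) / (Dlen u p) ^ 3"
      using xy by (simp add: aa_def bb_def Dlen_def add.commute)
    finally show ?thesis .
  qed
  show ?thesis unfolding Hcurv_def h1 h2
    by (simp add: aa_def[symmetric] bb_def[symmetric] add_divide_distrib[symmetric]) (simp add: algebra_simps)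
qed



lemma rank1_identity:
  fixes m11 m12 m21 m22 l1 l2 h1 h2 :: real
  assumes "m11 * m22 - m12 * m21 = 0"
  shows "(m11 * h1 + m12 * h2) * ((l1 * m11 + l2 * m21)\<^sup>2 + (l1 * m12 + l2 * m22)\<^sup>2)
        = (m11 * (l1 * m11 + l2 * m21) + m12 * (l1 * m12 + l2 * m22)) * ((l1 * m11 + l2 * m21) * h1 + (l1 * m12 + l2 * m22) * h2)"
    and "(m21 * h1 + m22 * h2) * ((l1 * m11 + l2 * m21)\<^sup>2 + (l1 * m12 + l2 * m22)\<^sup>2)
        = (m21 * (l1 * m11 + l2 * m21) + m22 * (l1 * m12 + l2 * m22)) * ((l1 * m11 + l2 * m21) * h1 + (l1 * m12 + l2 * m22) * h2)"
  using assms by algebra+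

lemma H_identity:
  fixes a b ax ay bx by' l1 l2 :: real
  assumes "l1 * a + l2 * b = 0"
  shows "(ax * b\<^sup>2 - (ay + bx) * a * b + by' * a\<^sup>2) * (l1\<^sup>2 + l2\<^sup>2)
       = (l1\<^sup>2 * ax + l1 * l2 * (ay + bx) + l2\<^sup>2 * by') * (a\<^sup>2 + b\<^sup>2)"
  using assms by algebra

lemma inv_identity:
  fixes m11 m12 m21 m22 h1 h2 :: real
  shows "(m11 * m22 - m12 * m21) * h1 = m22 * (m11 * h1 + m12 * h2) - m12 * (m21 * h1 + m22 * h2)"
    and "(m11 * m22 - m12 * m21) * h2 = m11 * (m21 * h1 + m22 * h2) - m21 * (m11 * h1 + m12 * h2)"
  by algebra+



lemma dist_le_l1: "dist q p0 \<le> \<bar>fst q - fst p0\<bar> + \<bar>snd q - snd p0\<bar>" for q p0 :: "real \<times> real"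
proof -
  have "dist q p0 = sqrt ((fst q - fst p0)\<^sup>2 + (snd q - snd p0)\<^sup>2)"
    by (cases q, cases p0) (simp add: dist_Pair_Pair dist_real_def)
  then show ?thesis using sqrt_sum_squares_le_sum_abs by simp
qed

lemma case_invertible:
  fixes a b :: "real \<times> real \<Rightarrow> real"
  assumes ea: "\<And>e. e > 0 \<Longrightarrow> \<exists>d>0. \<forall>q. dist q p0 < d \<longrightarrow> \<bar>a q - m11 * (fst q - fst p0) - m12 * (snd q - snd p0)\<bar> \<le> e * dist q p0"
    and eb: "\<And>e. e > 0 \<Longrightarrow> \<exists>d>0. \<forall>q. dist q p0 < d \<longrightarrow> \<bar>b q - m21 * (fst q - fst p0) - m22 * (snd q - snd p0)\<bar> \<le> e * dist q p0"
    and det: "m11 * m22 - m12 * m21 \<noteq> 0"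
  shows "\<exists>e>0. \<forall>q. dist q p0 < e \<and> a q = 0 \<and> b q = 0 \<longrightarrow> q = p0"
proof -
  define dt where "dt = m11 * m22 - m12 * m21"
  define S where "S = \<bar>m11\<bar> + \<bar>m12\<bar> + \<bar>m21\<bar> + \<bar>m22\<bar>"
  have S0: "S \<ge> 0" by (simp add: S_def)
  define \<epsilon> where "\<epsilon> = \<bar>dt\<bar> / (2 * (S + 1))"
  have adt: "\<bar>dt\<bar> > 0" using det by (simp add: dt_def)
  have \<epsilon>: "\<epsilon> > 0" using adt S0 by (simp add: \<epsilon>_def)
  have key: "2 * S * \<epsilon> < \<bar>dt\<bar>"
  proof -
    have "2 * S * \<epsilon> = \<bar>dt\<bar> * (S / (S + 1))" using S0 by (simp add: \<epsilon>_def field_simps)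
    also have "\<dots> < \<bar>dt\<bar> * 1" using adt S0 by (intro mult_strict_left_mono) auto
    finally show ?thesis by simp
  qed
  obtain da where da: "da > 0" "\<forall>q. dist q p0 < da \<longrightarrow> \<bar>a q - m11 * (fst q - fst p0) - m12 * (snd q - snd p0)\<bar> \<le> \<epsilon> * dist q p0"
    using ea[OF \<epsilon>] by blast
  obtain db where db: "db > 0" "\<forall>q. dist q p0 < db \<longrightarrow> \<bar>b q - m21 * (fst q - fst p0) - m22 * (snd q - snd p0)\<bar> \<le> \<epsilon> * dist q p0"
    using eb[OF \<epsilon>] by blast
  have "\<forall>q. dist q p0 < min da db \<and> a q = 0 \<and> b q = 0 \<longrightarrow> q = p0"
  proof (intro allI impI)
    fix q assume q: "dist q p0 < min da db \<and> a q = 0 \<and> b q = 0"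
    define h1 where "h1 = fst q - fst p0"
    define h2 where "h2 = snd q - snd p0"
    define d where "d = dist q p0"
    define X where "X = m11 * h1 + m12 * h2"
    define Y where "Y = m21 * h1 + m22 * h2"
    have X: "\<bar>X\<bar> \<le> \<epsilon> * d" using da(2)[rule_format, of q] q unfolding X_def h1_def h2_def d_def by (simp add: abs_minus_commute)
    have Y: "\<bar>Y\<bar> \<le> \<epsilon> * d" using db(2)[rule_format, of q] q unfolding Y_def h1_def h2_def d_def by (simp add: abs_minus_commute)
    have i1: "dt * h1 = m22 * X - m12 * Y" and i2: "dt * h2 = m11 * Y - m21 * X"
      unfolding dt_def X_def Y_def using inv_identity by auto
    have "\<bar>dt\<bar> * \<bar>h1\<bar> \<le> \<bar>m22\<bar> * \<bar>X\<bar> + \<bar>m12\<bar> * \<bar>Y\<bar>"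
      using i1 by (metis abs_mult abs_triangle_ineq4)
    also have "\<dots> \<le> \<bar>m22\<bar> * (\<epsilon> * d) + \<bar>m12\<bar> * (\<epsilon> * d)"
      using X Y by (intro add_mono mult_left_mono) auto
    finally have b1: "\<bar>dt\<bar> * \<bar>h1\<bar> \<le> (\<bar>m22\<bar> + \<bar>m12\<bar>) * (\<epsilon> * d)" by (simp add: algebra_simps)
    have "\<bar>dt\<bar> * \<bar>h2\<bar> \<le> \<bar>m11\<bar> * \<bar>Y\<bar> + \<bar>m21\<bar> * \<bar>X\<bar>"
      using i2 by (metis abs_mult abs_triangle_ineq4)
    also have "\<dots> \<le> \<bar>m11\<bar> * (\<epsilon> * d) + \<bar>m21\<bar> * (\<epsilon> * d)"
      using X Y by (intro add_mono mult_left_mono) auto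
    finally have b2: "\<bar>dt\<bar> * \<bar>h2\<bar> \<le> (\<bar>m11\<bar> + \<bar>m21\<bar>) * (\<epsilon> * d)" by (simp add: algebra_simps)
    have "\<bar>dt\<bar> * d \<le> \<bar>dt\<bar> * (\<bar>h1\<bar> + \<bar>h2\<bar>)"
      using dist_le_l1[of q p0] adt unfolding d_def h1_def h2_def by (intro mult_left_mono) auto
    also have "\<dots> \<le> S * (\<epsilon> * d)" using b1 b2 unfolding S_def by (simp add: algebra_simps)
    also have "\<dots> \<le> 2 * S * \<epsilon> * d" using S0 \<epsilon> by (simp add: d_def mult_right_mono)
    finally have "\<bar>dt\<bar> * d \<le> 2 * S * \<epsilon> * d" .
    moreover have "d \<ge> 0" by (simp add: d_def)
    ultimately have "d = 0"
      using key by (metis mult_right_less_imp_less linorder_not_le order_le_less mult_strict_right_mono)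
    then show "q = p0" by (simp add: d_def)
  qed
  moreover have "min da db > 0" using da db by simp
  ultimately show ?thesis by blast
qed



lemma case_rank1:
  fixes a b Qf :: "real \<times> real \<Rightarrow> real"
  assumes ea: "\<And>e. e > 0 \<Longrightarrow> \<exists>d>0. \<forall>q. dist q p0 < d \<longrightarrow> \<bar>a q - m11 * (fst q - fst p0) - m12 * (snd q - snd p0)\<bar> \<le> e * dist q p0"
    and eb: "\<And>e. e > 0 \<Longrightarrow> \<exists>d>0. \<forall>q. dist q p0 < d \<longrightarrow> \<bar>b q - m21 * (fst q - fst p0) - m22 * (snd q - snd p0)\<bar> \<le> e * dist q p0"
    and det: "m11 * m22 - m12 * m21 = 0"
    and Q0: "l1\<^sup>2 * m11 + l1 * l2 * (m12 + m21) + l2\<^sup>2 * m22 \<noteq> 0"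
    and Qc: "isCont Qf p0" and Qp0: "Qf p0 = l1\<^sup>2 * m11 + l1 * l2 * (m12 + m21) + l2\<^sup>2 * m22"
    and C: "C > 0"
    and z: "a p0 = 0" "b p0 = 0"
    and Hb: "\<exists>\<rho>0>0. \<forall>q. dist q p0 < \<rho>0 \<longrightarrow> l1 * a q + l2 * b q = 0 \<longrightarrow> (a q \<noteq> 0 \<or> b q \<noteq> 0) \<longrightarrow>
              \<bar>Qf q\<bar> \<le> C * (l1\<^sup>2 + l2\<^sup>2) * sqrt ((a q)\<^sup>2 + (b q)\<^sup>2) / dist q p0"
  shows "\<exists>\<rho>>0. \<forall>q. dist q p0 < \<rho> \<longrightarrow> l1 * a q + l2 * b q = 0 \<longrightarrow> a q = 0 \<and> b q = 0"
proof -
  define Q0v where "Q0v = l1\<^sup>2 * m11 + l1 * l2 * (m12 + m21) + l2\<^sup>2 * m22"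
  define c0 where "c0 = \<bar>Q0v\<bar> / 2"
  have c0: "c0 > 0" using Q0 by (simp add: c0_def Q0v_def)
  obtain \<rho>0 where \<rho>0: "\<rho>0 > 0" "\<forall>q. dist q p0 < \<rho>0 \<longrightarrow> l1 * a q + l2 * b q = 0 \<longrightarrow> (a q \<noteq> 0 \<or> b q \<noteq> 0) \<longrightarrow>
              \<bar>Qf q\<bar> \<le> C * (l1\<^sup>2 + l2\<^sup>2) * sqrt ((a q)\<^sup>2 + (b q)\<^sup>2) / dist q p0" using Hb by blast
  obtain \<rho>1 where \<rho>1: "\<rho>1 > 0" "\<forall>q. dist q p0 < \<rho>1 \<longrightarrow> dist (Qf q) (Qf p0) < c0"
    using Qc c0 unfolding continuous_at_eps_delta by blast
  define r1 where "r1 = l1 * m11 + l2 * m21"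
  define r2 where "r2 = l1 * m12 + l2 * m22"
  define N where "N = r1\<^sup>2 + r2\<^sup>2"
  have lr: "l1 * r1 + l2 * r2 = Q0v" unfolding r1_def r2_def Q0v_def by (simp add: algebra_simps power2_eq_square)
  have N: "N > 0"
  proof (rule ccontr)
    assume "\<not> N > 0"
    then have "r1 = 0" "r2 = 0" unfolding N_def using sum_power2_gt_zero_iff by blast+
    then show False using lr Q0 by (simp add: Q0v_def)
  qed
  define L where "L = l1\<^sup>2 + l2\<^sup>2"
  have L: "L > 0"
  proof (rule ccontr)
    assume "\<not> L > 0"
    then have "l1 = 0" "l2 = 0" unfolding L_def using sum_power2_gt_zero_iff by blast+
    then show False using Q0 by simp
  qed
  define K where "K = (\<bar>m11 * r1 + m12 * r2\<bar> + \<bar>m21 * r1 + m22 * r2\<bar>) / N"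
  have K: "K \<ge> 0" using N by (simp add: K_def)
  define \<Lambda> where "\<Lambda> = K * (\<bar>l1\<bar> + \<bar>l2\<bar>) + 2"
  have "K * (\<bar>l1\<bar> + \<bar>l2\<bar>) \<ge> 0" using K by simp
  then have \<Lambda>: "\<Lambda> > 0" unfolding \<Lambda>_def by linarith
  define \<epsilon> where "\<epsilon> = c0 / (2 * C * L * \<Lambda>)"
  have \<epsilon>: "\<epsilon> > 0" using c0 C L \<Lambda> by (simp add: \<epsilon>_def)
  have CLe: "C * L * \<Lambda> * \<epsilon> = c0 / 2" using C L \<Lambda> by (simp add: \<epsilon>_def field_simps)
  obtain da where da: "da > 0" "\<forall>q. dist q p0 < da \<longrightarrow> \<bar>a q - m11 * (fst q - fst p0) - m12 * (snd q - snd p0)\<bar> \<le> \<epsilon> * dist q p0"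
    using ea[OF \<epsilon>] by blast
  obtain db where db: "db > 0" "\<forall>q. dist q p0 < db \<longrightarrow> \<bar>b q - m21 * (fst q - fst p0) - m22 * (snd q - snd p0)\<bar> \<le> \<epsilon> * dist q p0"
    using eb[OF \<epsilon>] by blast
  define \<rho> where "\<rho> = min \<rho>0 (min \<rho>1 (min da db))"
  have "\<rho> > 0" using \<rho>0 \<rho>1 da db by (simp add: \<rho>_def)
  moreover have "a q = 0 \<and> b q = 0" if q: "dist q p0 < \<rho>" and \<phi>: "l1 * a q + l2 * b q = 0" for q
  proof (rule ccontr)
    assume nz: "\<not> (a q = 0 \<and> b q = 0)"
    define d where "d = dist q p0"
    have "q \<noteq> p0" using nz z by auto
    then have d: "d > 0" by (simp add: d_def)
    define h1 where "h1 = fst q - fst p0"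
    define h2 where "h2 = snd q - snd p0"
    define X where "X = m11 * h1 + m12 * h2"
    define Y where "Y = m21 * h1 + m22 * h2"
    have aX: "\<bar>a q - X\<bar> \<le> \<epsilon> * d" using da(2)[rule_format, of q] q unfolding X_def h1_def h2_def d_def \<rho>_def
      by (simp add: algebra_simps)
    have bY: "\<bar>b q - Y\<bar> \<le> \<epsilon> * d" using db(2)[rule_format, of q] q unfolding Y_def h1_def h2_def d_def \<rho>_def
      by (simp add: algebra_simps)
    define rh where "rh = r1 * h1 + r2 * h2"
    have rh: "rh = l1 * (X - a q) + l2 * (Y - b q)"
      using \<phi> unfolding rh_def r1_def r2_def X_def Y_def by (simp add: algebra_simps)
    have "\<bar>rh\<bar> \<le> \<bar>l1\<bar> * \<bar>X - a q\<bar> + \<bar>l2\<bar> * \<bar>Y - b q\<bar>"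
      unfolding rh by (metis abs_mult abs_triangle_ineq)
    also have "\<dots> \<le> \<bar>l1\<bar> * (\<epsilon> * d) + \<bar>l2\<bar> * (\<epsilon> * d)"
      using aX bY by (intro add_mono mult_left_mono) (auto simp: abs_minus_commute)
    finally have rhb: "\<bar>rh\<bar> \<le> (\<bar>l1\<bar> + \<bar>l2\<bar>) * (\<epsilon> * d)" by (simp add: algebra_simps)
    have iX: "X * N = (m11 * r1 + m12 * r2) * rh" and iY: "Y * N = (m21 * r1 + m22 * r2) * rh"
      using rank1_identity[OF det, of h1 h2 l1 l2] unfolding X_def Y_def N_def rh_def r1_def r2_def
      by (simp_all add: mult.commute)
    have "\<bar>X\<bar> * N = \<bar>m11 * r1 + m12 * r2\<bar> * \<bar>rh\<bar>"
    proof -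
      have "\<bar>X * N\<bar> = \<bar>(m11 * r1 + m12 * r2) * rh\<bar>" using iX by simp
      then show ?thesis by (simp only: abs_mult abs_of_pos[OF N])
    qed
    then have "\<bar>X\<bar> = \<bar>m11 * r1 + m12 * r2\<bar> * \<bar>rh\<bar> / N" using N by (simp add: eq_divide_eq)
    moreover have "\<bar>Y\<bar> * N = \<bar>m21 * r1 + m22 * r2\<bar> * \<bar>rh\<bar>"
    proof -
      have "\<bar>Y * N\<bar> = \<bar>(m21 * r1 + m22 * r2) * rh\<bar>" using iY by simp
      then show ?thesis by (simp only: abs_mult abs_of_pos[OF N])
    qed
    then have "\<bar>Y\<bar> = \<bar>m21 * r1 + m22 * r2\<bar> * \<bar>rh\<bar> / N" using N by (simp add: eq_divide_eq)
    ultimately have XY: "\<bar>X\<bar> + \<bar>Y\<bar> = K * \<bar>rh\<bar>" by (simp add: K_def add_divide_distrib distrib_right)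
    have "\<bar>a q\<bar> + \<bar>b q\<bar> \<le> \<bar>X\<bar> + \<bar>Y\<bar> + 2 * (\<epsilon> * d)" using aX bY by linarith
    also have "\<dots> \<le> K * ((\<bar>l1\<bar> + \<bar>l2\<bar>) * (\<epsilon> * d)) + 2 * (\<epsilon> * d)"
      unfolding XY using rhb K \<epsilon> d by (intro add_mono mult_left_mono) auto
    also have "\<dots> = \<Lambda> * \<epsilon> * d" by (simp add: \<Lambda>_def algebra_simps)
    finally have abb: "\<bar>a q\<bar> + \<bar>b q\<bar> \<le> \<Lambda> * \<epsilon> * d" .
    have sq: "sqrt ((a q)\<^sup>2 + (b q)\<^sup>2) \<le> \<Lambda> * \<epsilon> * d"
      using sqrt_sum_squares_le_sum_abs[of "a q" "b q"] abb by linarith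
    have "dist q p0 < \<rho>0" using q by (simp add: \<rho>_def)
    then have "\<bar>Qf q\<bar> \<le> C * L * sqrt ((a q)\<^sup>2 + (b q)\<^sup>2) / d"
      using \<rho>0(2) \<phi> nz unfolding L_def d_def by blast
    also have "\<dots> \<le> C * L * (\<Lambda> * \<epsilon> * d) / d"
      using sq C L d by (intro divide_right_mono mult_left_mono) auto
    also have "\<dots> = c0 / 2" using d CLe by (simp add: field_simps)
    finally have up: "\<bar>Qf q\<bar> \<le> c0 / 2" .
    have "dist q p0 < \<rho>1" using q by (simp add: \<rho>_def)
    then have "\<bar>Qf q - Q0v\<bar> < c0" using \<rho>1(2)[rule_format, of q] Qp0 by (simp add: dist_real_def Q0v_def)
    then have "\<bar>Qf q\<bar> > c0" unfolding c0_def by linarith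
    then show False using up c0 by linarith
  qed
  ultimately show ?thesis by blast
qed



theorem theoremB:
  fixes \<Omega> :: "(real \<times> real) set" and u :: "real \<times> real \<Rightarrow> real" and p0 :: "real \<times> real"
  assumes "open \<Omega>" and "connected \<Omega>"
    and "C2_on \<Omega> u"
    and "p0 \<in> Sing \<Omega> u"
    and "\<exists>C>0. \<exists>U. open U \<and> p0 \<in> U \<and>
           (\<forall>p \<in> (U \<inter> \<Omega>) - Sing \<Omega> u. \<bar>Hcurv u p\<bar> \<le> C / dist p p0)"
  shows "(\<exists>e>0. ball p0 e \<inter> Sing \<Omega> u = {p0})
       \<or> (\<exists>V. open V \<and> p0 \<in> V \<and> C1_arc_through (V \<inter> Sing \<Omega> u) p0)"
proof -
  obtain C U where C: "C > 0" and U: "open U" "p0 \<in> U"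
    and HU: "\<forall>p \<in> (U \<inter> \<Omega>) - Sing \<Omega> u. \<bar>Hcurv u p\<bar> \<le> C / dist p p0"
    using assms(5) by blast
  have \<Omega>: "open \<Omega>" by fact
  have C1: "C1_on \<Omega> u" "C1_on \<Omega> (px u)" "C1_on \<Omega> (py u)" using assms(3) by (auto simp: C2_on_def)
  have p0\<Omega>: "p0 \<in> \<Omega>" and S0: "px u p0 - snd p0 = 0" "py u p0 + fst p0 = 0"
    using assms(4) by (auto simp: Sing_def)
  define a where "a p = px u p - snd p" for p
  define b where "b p = py u p + fst p" for p
  define ax where "ax = px (px u)"
  define ay where "ay p = py (px u) p - 1" for p
  define bx where "bx p = px (py u) p + 1" for p
  define by' where "by' = py (py u)"
  have Sing_iff: "p \<in> Sing \<Omega> u \<longleftrightarrow> p \<in> \<Omega> \<and> a p = 0 \<and> b p = 0" for p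
    by (simp add: Sing_def a_def b_def)
  have a0: "a p0 = 0" and b0: "b p0 = 0" using S0 by (auto simp: a_def b_def)
  have dax: "DERIV (\<lambda>t. a (t, snd p)) (fst p) :> ax p" if "p \<in> \<Omega>" for p
    using DERIV_diff[OF C1_dx[OF C1(2) that] DERIV_const[of "snd p"]] by (simp add: a_def ax_def)
  have day: "DERIV (\<lambda>t. a (fst p, t)) (snd p) :> ay p" if "p \<in> \<Omega>" for p
    using DERIV_diff[OF C1_dy[OF C1(2) that] DERIV_ident] by (simp add: a_def ay_def)
  have dbx: "DERIV (\<lambda>t. b (t, snd p)) (fst p) :> bx p" if "p \<in> \<Omega>" for p
    using DERIV_add[OF C1_dx[OF C1(3) that] DERIV_ident] by (simp add: b_def bx_def)
  have dby: "DERIV (\<lambda>t. b (fst p, t)) (snd p) :> by' p" if "p \<in> \<Omega>" for p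
    using DERIV_add[OF C1_dy[OF C1(3) that] DERIV_const[of "fst p"]] by (simp add: b_def by'_def)
  have cu: "continuous_on \<Omega> (px u)" "continuous_on \<Omega> (py u)"
    and cxx: "continuous_on \<Omega> (px (px u))" "continuous_on \<Omega> (py (px u))"
    and cyy: "continuous_on \<Omega> (px (py u))" "continuous_on \<Omega> (py (py u))"
    using C1 by (auto simp: C1_on_def)
  have ca: "continuous_on \<Omega> a" unfolding a_def by (intro continuous_intros cu)
  have cb: "continuous_on \<Omega> b" unfolding b_def by (intro continuous_intros cu)
  have cax: "continuous_on \<Omega> ax" unfolding ax_def by (rule cxx)
  have cay: "continuous_on \<Omega> ay" unfolding ay_def by (intro continuous_intros cxx)
  have cbx: "continuous_on \<Omega> bx" unfolding bx_def by (intro continuous_intros cyy)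
  have cby: "continuous_on \<Omega> by'" unfolding by'_def by (rule cyy)
  have iax: "isCont ax p0" and iay: "isCont ay p0" and ibx: "isCont bx p0" and iby: "isCont by' p0"
    using cax cay cbx cby \<Omega> p0\<Omega> continuous_on_eq_continuous_at by blast+
  have sw: "py (px u) p0 = px (py u) p0"
  proof (rule schwarz[where u=u and ux="px u" and uy="py u" and uxy="py (px u)" and uyx="px (py u)", OF \<Omega> p0\<Omega>])
    show "isCont (py (px u)) p0" "isCont (px (py u)) p0"
      using cxx cyy \<Omega> p0\<Omega> continuous_on_eq_continuous_at by blast+
    fix p assume p: "p \<in> \<Omega>"
    show "DERIV (\<lambda>t. u (t, snd p)) (fst p) :> px u p" by (rule C1_dx[OF C1(1) p])
    show "DERIV (\<lambda>t. u (fst p, t)) (snd p) :> py u p" by (rule C1_dy[OF C1(1) p])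
    show "DERIV (\<lambda>t. px u (fst p, t)) (snd p) :> py (px u) p" by (rule C1_dy[OF C1(2) p])
    show "DERIV (\<lambda>t. py u (t, snd p)) (fst p) :> px (py u) p" by (rule C1_dx[OF C1(3) p])
  qed
  define m11 where "m11 = ax p0"
  define m12 where "m12 = ay p0"
  define m21 where "m21 = bx p0"
  define m22 where "m22 = by' p0"
  have m2: "m21 - m12 = 2" using sw by (simp add: m21_def m12_def bx_def ay_def)
  have ea: "\<exists>d>0. \<forall>q. dist q p0 < d \<longrightarrow> \<bar>a q - m11 * (fst q - fst p0) - m12 * (snd q - snd p0)\<bar> \<le> e * dist q p0"
    if "e > 0" for e
    using expansion[OF \<Omega> p0\<Omega> dax day iax iay that] a0 by (simp add: m11_def m12_def)
  have eb: "\<exists>d>0. \<forall>q. dist q p0 < d \<longrightarrow> \<bar>b q - m21 * (fst q - fst p0) - m22 * (snd q - snd p0)\<bar> \<le> e * dist q p0"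
    if "e > 0" for e
    using expansion[OF \<Omega> p0\<Omega> dbx dby ibx iby that] b0 by (simp add: m21_def m22_def)
  show ?thesis
  proof (cases "m11 * m22 - m12 * m21 = 0")
    case False
    obtain e where e: "e > 0" "\<forall>q. dist q p0 < e \<and> a q = 0 \<and> b q = 0 \<longrightarrow> q = p0"
      using case_invertible[OF ea eb False] by blast
    have "ball p0 e \<inter> Sing \<Omega> u = {p0}"
    proof
      show "ball p0 e \<inter> Sing \<Omega> u \<subseteq> {p0}"
        using e by (auto simp: Sing_iff dist_commute)
      show "{p0} \<subseteq> ball p0 e \<inter> Sing \<Omega> u" using e assms(4) by auto
    qed
    then show ?thesis using e by blast
  next
    case True
    note det = True
    obtain l1 l2 :: real where Q0: "l1\<^sup>2 * m11 + l1 * l2 * (m12 + m21) + l2\<^sup>2 * m22 \<noteq> 0"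
    proof -
      consider "m11 \<noteq> 0" | "m11 = 0" "m22 \<noteq> 0" | "m11 = 0" "m22 = 0" by blast
      then show ?thesis
      proof cases
        case 1 then show ?thesis using that[of 1 0] by simp
      next
        case 2 then show ?thesis using that[of 0 1] by simp
      next
        case 3
        have "m12 + m21 \<noteq> 0"
        proof
          assume s: "m12 + m21 = 0"
          have m12: "m12 = - m21" using s by linarith
          have "m12 * m21 = 0" using det 3 by simp
          then have "m21 = 0" unfolding m12 by simp
          then show False using s m2 by simp
        qed
        then show ?thesis using that[of 1 1] 3 by simp
      qed
    qed
    define L where "L = l1\<^sup>2 + l2\<^sup>2"
    define Qf where "Qf p = l1\<^sup>2 * ax p + l1 * l2 * (ay p + bx p) + l2\<^sup>2 * by' p" for p
    have Qc: "isCont Qf p0" unfolding Qf_def by (intro continuous_intros iax iay ibx iby)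
    have Qp0: "Qf p0 = l1\<^sup>2 * m11 + l1 * l2 * (m12 + m21) + l2\<^sup>2 * m22"
      by (simp add: Qf_def m11_def m12_def m21_def m22_def)
    have Hb: "\<exists>\<rho>0>0. \<forall>q. dist q p0 < \<rho>0 \<longrightarrow> l1 * a q + l2 * b q = 0 \<longrightarrow> (a q \<noteq> 0 \<or> b q \<noteq> 0) \<longrightarrow>
              \<bar>Qf q\<bar> \<le> C * (l1\<^sup>2 + l2\<^sup>2) * sqrt ((a q)\<^sup>2 + (b q)\<^sup>2) / dist q p0"
    proof -
      obtain \<rho>0 where \<rho>0: "\<rho>0 > 0" "ball p0 \<rho>0 \<subseteq> U \<inter> \<Omega>"
        using open_Int[OF U(1) \<Omega>] U(2) p0\<Omega> open_contains_ball by blast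
      have "\<bar>Qf q\<bar> \<le> C * (l1\<^sup>2 + l2\<^sup>2) * sqrt ((a q)\<^sup>2 + (b q)\<^sup>2) / dist q p0"
        if q: "dist q p0 < \<rho>0" and \<phi>: "l1 * a q + l2 * b q = 0" and nz: "a q \<noteq> 0 \<or> b q \<noteq> 0" for q
      proof -
        have qU: "q \<in> U \<inter> \<Omega>" using \<rho>0 q by (auto simp: dist_commute)
        have qS: "q \<notin> Sing \<Omega> u" using nz by (simp add: Sing_iff)
        have H: "\<bar>Hcurv u q\<bar> \<le> C / dist q p0" using HU qU qS by blast
        define D where "D = sqrt ((a q)\<^sup>2 + (b q)\<^sup>2)"
        have Dl: "Dlen u q = D" by (simp add: Dlen_def D_def a_def b_def)
        have pos: "(a q)\<^sup>2 + (b q)\<^sup>2 > 0" using nz by (simp add: sum_power2_gt_zero_iff)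
        have D: "D > 0" using pos by (simp add: D_def)
        have D2: "D\<^sup>2 = (a q)\<^sup>2 + (b q)\<^sup>2" using pos by (simp add: D_def)
        have Hq: "Hcurv u q = (px (px u) q * (py u q + fst q)\<^sup>2
          - ((py (px u) q - 1) + (px (py u) q + 1)) * (px u q - snd q) * (py u q + fst q)
          + py (py u) q * (px u q - snd q)\<^sup>2) / (Dlen u q) ^ 3"
          using Hcurv_formula[OF assms(3), of q] qU Dl D by simp
        define NN where "NN = ax q * (b q)\<^sup>2 - (ay q + bx q) * a q * b q + by' q * (a q)\<^sup>2"
        have Hf: "Hcurv u q = NN / D ^ 3"
          unfolding NN_def a_def b_def ax_def ay_def bx_def by'_def Dl[symmetric] by (rule Hq)
        have L: "L > 0"
        proof (rule ccontr)
          assume "\<not> L > 0"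
          then have "l1 = 0" "l2 = 0" unfolding L_def using sum_power2_gt_zero_iff by blast+
          then show False using Q0 by simp
        qed
        have num: "NN * L = Qf q * D\<^sup>2"
          unfolding NN_def D2 L_def Qf_def using H_identity[OF \<phi>] by simp
        have NN: "NN = Qf q * D\<^sup>2 / L" using num L by (simp add: eq_divide_eq)
        have D3: "D ^ 3 = D\<^sup>2 * D" by (simp add: power2_eq_square power3_eq_cube)
        have "Hcurv u q = Qf q / (L * D)"
          unfolding Hf NN D3 using D L by (simp add: divide_divide_eq_left)
        then have "Qf q = Hcurv u q * (L * D)" using D L by (simp add: divide_eq_eq)
        then have "\<bar>Qf q\<bar> = \<bar>Hcurv u q\<bar> * (L * D)" using D L by (simp add: abs_mult)
        also have "\<dots> \<le> C / dist q p0 * (L * D)" using H D L by (intro mult_right_mono) auto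
        finally show ?thesis by (simp add: L_def D_def)
      qed
      then show ?thesis using \<rho>0 by blast
    qed
    obtain \<rho> where \<rho>: "\<rho> > 0" "\<forall>q. dist q p0 < \<rho> \<longrightarrow> l1 * a q + l2 * b q = 0 \<longrightarrow> a q = 0 \<and> b q = 0"
      using case_rank1[OF ea eb det Q0 Qc Qp0 C a0 b0 Hb] by blast
    define W where "W = \<Omega> \<inter> ball p0 \<rho>"
    have W: "open W" "p0 \<in> W" using \<Omega> p0\<Omega> \<rho> by (auto simp: W_def)
    have WO: "W \<subseteq> \<Omega>" by (auto simp: W_def)
    have "\<exists>V. open V \<and> p0 \<in> V \<and> V \<subseteq> W \<and> C1_arc_through (V \<inter> {p. l1 * a p + l2 * b p = 0}) p0"
    proof (rule ift_arc[where \<phi>x="\<lambda>p. l1 * ax p + l2 * bx p" and \<phi>y="\<lambda>p. l1 * ay p + l2 * by' p"])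
      show "open W" "p0 \<in> W" by fact+
      fix p assume "p \<in> W"
      then have p: "p \<in> \<Omega>" using WO by auto
      show "DERIV (\<lambda>t. l1 * a (t, snd p) + l2 * b (t, snd p)) (fst p) :> l1 * ax p + l2 * bx p"
        by (intro DERIV_add DERIV_cmult dax dbx p)
      show "DERIV (\<lambda>t. l1 * a (fst p, t) + l2 * b (fst p, t)) (snd p) :> l1 * ay p + l2 * by' p"
        by (intro DERIV_add DERIV_cmult day dby p)
    next
      show "continuous_on W (\<lambda>p. l1 * a p + l2 * b p)"
        by (intro continuous_intros continuous_on_subset[OF ca WO] continuous_on_subset[OF cb WO])
      show "continuous_on W (\<lambda>p. l1 * ax p + l2 * bx p)"
        by (intro continuous_intros continuous_on_subset[OF cax WO] continuous_on_subset[OF cbx WO])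
      show "continuous_on W (\<lambda>p. l1 * ay p + l2 * by' p)"
        by (intro continuous_intros continuous_on_subset[OF cay WO] continuous_on_subset[OF cby WO])
      show "l1 * a p0 + l2 * b p0 = 0" using a0 b0 by simp
      show "l1 * ax p0 + l2 * bx p0 \<noteq> 0 \<or> l1 * ay p0 + l2 * by' p0 \<noteq> 0"
      proof (rule ccontr)
        assume "\<not> ?thesis"
        then have "l1 * m11 + l2 * m21 = 0" "l1 * m12 + l2 * m22 = 0"
          by (auto simp: m11_def m12_def m21_def m22_def)
        then have "l1 * (l1 * m11 + l2 * m21) + l2 * (l1 * m12 + l2 * m22) = 0" by simp
        then show False using Q0 by (simp add: algebra_simps power2_eq_square)
      qed
    qed
    then obtain V where V: "open V" "p0 \<in> V" "V \<subseteq> W"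
      and arc: "C1_arc_through (V \<inter> {p. l1 * a p + l2 * b p = 0}) p0" by blast
    have "V \<inter> Sing \<Omega> u = V \<inter> {p. l1 * a p + l2 * b p = 0}"
    proof (intro set_eqI iffI)
      fix p assume "p \<in> V \<inter> Sing \<Omega> u"
      then show "p \<in> V \<inter> {p. l1 * a p + l2 * b p = 0}" by (auto simp: Sing_iff)
    next
      fix p assume p: "p \<in> V \<inter> {p. l1 * a p + l2 * b p = 0}"
      then have "p \<in> W" using V by auto
      then have "p \<in> \<Omega>" "dist p p0 < \<rho>" by (auto simp: W_def dist_commute)
      moreover have "l1 * a p + l2 * b p = 0" using p by simp
      ultimately have "a p = 0 \<and> b p = 0" using \<rho>(2)[rule_format, of p] by blast
      then show "p \<in> V \<inter> Sing \<Omega> u" using p \<open>p \<in> \<Omega>\<close> by (auto simp: Sing_iff)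
    qed
    then show ?thesis using V arc by auto
  qed
qed


end
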